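(* Let $m\ge2$ and let $a_1,a_2,b_1,b_2,b_3,c_1,\dots,c_{2m}\in\mathbb{C}$ with $a_1\ne a_2$, $b_1,b_2,b_3$ pairwise distinct, $c_1,\dots,c_{2m}$ pairwise distinct, and $ma_1+ma_2=b_1+(m-1)b_2+mb_3+\sum_{i=1}^{2m}c_i$. Let ${\bf B},{\bf C}$ be the $2m\times 2m$ matrices defined in the context ("even family"). Then ${\bf A}={\bf B}+{\bf C}$ is diagonalizable, with eigenvalues $a_1$ of multiplicity $m$ and $a_2$ of multiplicity $m$.
   Context: Notation: $p_i^{jk}=c_i+b_j-a_k$ and $q_{ij}=c_i+c_j+b_2+b_3-a_1-a_2$; empty products are $1$. Rows/columns are indexed $1,\dots,2m$. The matrix ${\bf B}$ has $B_{11}=b_1$, $B_{1+i,1+i}=b_2$ ($1\le i\le m-1$), $B_{m+i,m+i}=b_3$ ($1\le i\le m$), the entries $B_{1,1+j}=(-1)^{m+1-j}\frac{\prod_{k=j+1}^m q_{k,2m-j}}{\prod_{k=m+1}^{2m-1-j}(c_k-c_{2m-j})}$ ($1\le j\le m-1$), $B_{1,m+j}=(-1)^{m-j}p^{31}_{m+1-j}\frac{\prod_{k=m+j}^{2m-1}q_{m+1-j,k}}{\prod_{k=1}^{m-j}(c_k-c_{m+1-j})}$ ($1\le j\le m$), $B_{1+i,m+j}=(-1)^{m-j}p^{31}_{m+1-j}\frac{\prod_{k=1,k\ne m+1-j}^{i}q_{k,2m-i}\prod_{k=m+j,k\ne 2m-i}^{2m-1}q_{m+1-j,k}}{\prod_{k=2m+1-i}^{2m-1}(c_{2m-i}-c_k)\prod_{k=1}^{m-j}(c_k-c_{m+1-j})}$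 ($1\le i\le m-1$, $1\le j\le m$), and all other entries $0$. The matrix ${\bf C}$ has $C_{11}=c_{2m}$, $C_{1+i,1+i}=c_{2m-i}$ ($1\le i\le m-1$), $C_{m+i,m+i}=c_{m+1-i}$ ($1\le i\le m$), the entries $C_{1+i,1}=-\frac{\prod_{k=1}^i q_{k,2m-i}}{\prod_{k=2m+1-i}^{2m-1}(c_{2m-i}-c_k)}$ ($1\le i\le m-1$), $C_{m+i,1}=-p^{32}_{m+1-i}\frac{\prod_{k=m+1}^{m-1+i}q_{m+1-i,k}}{\prod_{k=m+2-i}^m(c_{m+1-i}-c_k)}$ ($1\le i\le m$), $C_{m+i,1+j}=(-1)^{m+1-j}p^{32}_{m+1-i}\frac{\prod_{k=m+1,k\ne2m-j}^{m-1+i}q_{m+1-i,k}\prod_{k=j+1,k\ne m+1-i}^m q_{k,2m-j}}{\prod_{k=m+2-i}^m(c_{m+1-i}-c_k)\prod_{k=m+1}^{2m-1-j}(c_k-c_{2m-j})}$ ($1\le i\le m$, $1\le j\le m-1$), and all other entries $0$. *)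

theory Defs
  imports "Jordan_Normal_Form.Char_Poly" "HOL-Computational_Algebra.Polynomial"
begin

text \<open>Notation of the paper (indices 1-based). p31 i = p_i^{31}, p32 i = p_i^{32}.\<close>

definition qq :: "complex \<Rightarrow> complex \<Rightarrow> complex \<Rightarrow> complex \<Rightarrow> (nat \<Rightarrow> complex) \<Rightarrow> nat \<Rightarrow> nat \<Rightarrow> complex" where
  "qq a1 a2 b2 b3 c i j = c i + c j + b2 + b3 - a1 - a2"

definition pp :: "(nat \<Rightarrow> complex) \<Rightarrow> complex \<Rightarrow> complex \<Rightarrow> nat \<Rightarrow> complex" where
  "pp c bj ak i = c i + bj - ak"

definition B_entry :: "nat \<Rightarrow> complex \<Rightarrow> complex \<Rightarrow> complex \<Rightarrow> complex \<Rightarrow> complex \<Rightarrow> (nat \<Rightarrow> complex) \<Rightarrow> nat \<Rightarrow> nat \<Rightarrow> complex" where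
  "B_entry m a1 a2 b1 b2 b3 c r s =
    (let q = qq a1 a2 b2 b3 c; p31 = pp c b3 a1 in
     if r = 1 \<and> s = 1 then b1
     else if 2 \<le> r \<and> r \<le> m \<and> s = r then b2
     else if m + 1 \<le> r \<and> r \<le> 2*m \<and> s = r then b3
     else if r = 1 \<and> 2 \<le> s \<and> s \<le> m then
       (let j = s - 1 in
        (-1)^(m+1-j) * (\<Prod>k\<in>{j+1..m}. q k (2*m-j)) / (\<Prod>k\<in>{m+1..2*m-1-j}. (c k - c (2*m-j))))
     else if r = 1 \<and> m + 1 \<le> s \<and> s \<le> 2*m then
       (let j = s - m in
        (-1)^(m-j) * p31 (m+1-j) * (\<Prod>k\<in>{m+j..2*m-1}. q (m+1-j) k) / (\<Prod>k\<in>{1..m-j}. (c k - c (m+1-j))))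
     else if 2 \<le> r \<and> r \<le> m \<and> m + 1 \<le> s \<and> s \<le> 2*m then
       (let i = r - 1; j = s - m in
        (-1)^(m-j) * p31 (m+1-j)
          * (\<Prod>k\<in>{1..i} - {m+1-j}. q k (2*m-i)) * (\<Prod>k\<in>{m+j..2*m-1} - {2*m-i}. q (m+1-j) k)
          / ((\<Prod>k\<in>{2*m+1-i..2*m-1}. (c (2*m-i) - c k)) * (\<Prod>k\<in>{1..m-j}. (c k - c (m+1-j)))))
     else 0)"

definition C_entry :: "nat \<Rightarrow> complex \<Rightarrow> complex \<Rightarrow> complex \<Rightarrow> complex \<Rightarrow> (nat \<Rightarrow> complex) \<Rightarrow> nat \<Rightarrow> nat \<Rightarrow> complex" where
  "C_entry m a1 a2 b2 b3 c r s =
    (let q = qq a1 a2 b2 b3 c; p32 = pp c b3 a2 in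
     if r = 1 \<and> s = 1 then c (2*m)
     else if 2 \<le> r \<and> r \<le> m \<and> s = r then c (2*m - (r - 1))
     else if m + 1 \<le> r \<and> r \<le> 2*m \<and> s = r then c (m + 1 - (r - m))
     else if 2 \<le> r \<and> r \<le> m \<and> s = 1 then
       (let i = r - 1 in
        - (\<Prod>k\<in>{1..i}. q k (2*m-i)) / (\<Prod>k\<in>{2*m+1-i..2*m-1}. (c (2*m-i) - c k)))
     else if m + 1 \<le> r \<and> r \<le> 2*m \<and> s = 1 then
       (let i = r - m in
        - p32 (m+1-i) * (\<Prod>k\<in>{m+1..m-1+i}. q (m+1-i) k) / (\<Prod>k\<in>{m+2-i..m}. (c (m+1-i) - c k)))
     else if m + 1 \<le> r \<and> r \<le> 2*m \<and> 2 \<le> s \<and> s \<le> m then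
       (let i = r - m; j = s - 1 in
        (-1)^(m+1-j) * p32 (m+1-i)
          * (\<Prod>k\<in>{m+1..m-1+i} - {2*m-j}. q (m+1-i) k) * (\<Prod>k\<in>{j+1..m} - {m+1-i}. q k (2*m-j))
          / ((\<Prod>k\<in>{m+2-i..m}. (c (m+1-i) - c k)) * (\<Prod>k\<in>{m+1..2*m-1-j}. (c k - c (2*m-j)))))
     else 0)"

text \<open>JNF matrices are 0-based; entry (i,j) is the paper's entry (i+1,j+1).\<close>
definition matB :: "nat \<Rightarrow> complex \<Rightarrow> complex \<Rightarrow> complex \<Rightarrow> complex \<Rightarrow> complex \<Rightarrow> (nat \<Rightarrow> complex) \<Rightarrow> complex mat" where
  "matB m a1 a2 b1 b2 b3 c = mat (2*m) (2*m) (\<lambda>(i,j). B_entry m a1 a2 b1 b2 b3 c (i+1) (j+1))"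

definition matC :: "nat \<Rightarrow> complex \<Rightarrow> complex \<Rightarrow> complex \<Rightarrow> complex \<Rightarrow> (nat \<Rightarrow> complex) \<Rightarrow> complex mat" where
  "matC m a1 a2 b2 b3 c = mat (2*m) (2*m) (\<lambda>(i,j). C_entry m a1 a2 b2 b3 c (i+1) (j+1))"

definition diagonalizable :: "'a :: semiring_1 mat \<Rightarrow> bool" where
  "diagonalizable A \<longleftrightarrow> (\<exists>D. diagonal_mat D \<and> similar_mat A D)"

end

theory Submission
  imports Defs "Jordan_Normal_Form.Jordan_Normal_Form_Existence" "Jordan_Normal_Form.Jordan_Normal_Form_Uniqueness"
begin

hide_const (open) module.smult Coset.order

definition mtr :: "complex mat \<Rightarrow> complex" where "mtr A = (\<Sum>i<dim_row A. A $$ (i,i))"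

lemma sum_split_add: "(\<Sum>i<k+s. f i) = (\<Sum>i<k. f i) + (\<Sum>i<s. f (k+i::nat))"
  by (induction s) (auto simp: add.assoc)

lemma mtr_mult_comm: assumes "A \<in> carrier_mat n k" "B \<in> carrier_mat k n"
  shows "mtr (A*B) = mtr (B*A)"
proof -
  have "mtr (A*B) = (\<Sum>i<n. \<Sum>j<k. A$$(i,j) * B$$(j,i))"
    using assms by (auto simp: mtr_def scalar_prod_def atLeast0LessThan intro!: sum.cong)
  also have "\<dots> = (\<Sum>j<k. \<Sum>i<n. B$$(j,i) * A$$(i,j))" by (subst sum.swap) (simp add: mult.commute)
  also have "\<dots> = mtr (B*A)" using assms by (auto simp: mtr_def scalar_prod_def atLeast0LessThan intro!: sum.cong)
  finally show ?thesis .
qed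

lemma mtr_similar: assumes "similar_mat A B" shows "mtr A = mtr B"
proof -
  from similar_matD[OF assms] obtain n P Q where c: "{A, B, P, Q} \<subseteq> carrier_mat n n"
    and QP: "Q * P = 1\<^sub>m n" and A: "A = P * B * Q" by auto
  have "mtr A = mtr (Q * (P * B))" unfolding A using c by (intro mtr_mult_comm[of _ n n]) auto
  also have "Q * (P * B) = (Q * P) * B" using c by (subst assoc_mult_mat[of _ n n _ n _ n]) auto
  also have "\<dots> = B" using c QP by auto
  finally show ?thesis .
qed

lemma mtr_jordan: "mtr (jordan_matrix n_as) = (\<Sum>(k,e)\<leftarrow>n_as. of_nat k * e)"
proof (induction n_as)
  case Nil
  then show ?case by (simp add: mtr_def jordan_matrix_def)
next
  case (Cons ke n_as)
  obtain k e where ke: "ke = (k,e)" by force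
  let ?s = "sum_list (map fst n_as)"
  have "mtr (jordan_matrix (ke # n_as)) = (\<Sum>i<k + ?s. jordan_matrix (ke # n_as) $$ (i,i))"
    unfolding mtr_def ke by simp
  also have "\<dots> = (\<Sum>i<k. jordan_matrix (ke # n_as) $$ (i,i)) + (\<Sum>i<?s. jordan_matrix (ke # n_as) $$ (k+i,k+i))"
    by (rule sum_split_add)
  also have "(\<Sum>i<k. jordan_matrix (ke # n_as) $$ (i,i)) = (\<Sum>i<k. e)"
    unfolding ke jordan_matrix_Cons by (intro sum.cong) (auto simp: index_mat_four_block)
  also have "(\<Sum>i<?s. jordan_matrix (ke # n_as) $$ (k+i,k+i)) = (\<Sum>i<?s. jordan_matrix n_as $$ (i,i))"
    unfolding ke jordan_matrix_Cons by (intro sum.cong) (auto simp: index_mat_four_block)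
  also have "\<dots> = mtr (jordan_matrix n_as)" by (simp add: mtr_def)
  finally show ?case using Cons by (simp add: ke)
qed

lemma jordan_diag: "\<forall>(k,e)\<in>set n_as. k \<le> 1 \<Longrightarrow> diagonal_mat (jordan_matrix n_as)"
proof (induction n_as)
  case Nil
  then show ?case by (simp add: diagonal_mat_def jordan_matrix_def)
next
  case (Cons ke n_as)
  obtain k e where ke: "ke = (k,e)" by force
  from Cons have IH: "diagonal_mat (jordan_matrix n_as)" and k: "k \<le> 1" by (auto simp: ke)
  show ?case unfolding diagonal_mat_def
  proof (intro allI impI)
    fix i j assume i: "i < dim_row (jordan_matrix (ke # n_as))" and j: "j < dim_col (jordan_matrix (ke # n_as))"
      and ij: "i \<noteq> j"
    show "jordan_matrix (ke # n_as) $$ (i, j) = 0"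
    proof (cases "i < k \<and> j < k")
      case True with k ij show ?thesis by auto
    next
      case False
      then show ?thesis using i j ij IH k unfolding ke jordan_matrix_Cons diagonal_mat_def
        by (auto simp: index_mat_four_block)
    qed
  qed
qed

lemma sum_list_eq_le: "sum_list (map f L) = sum_list (map g L) \<Longrightarrow> (\<forall>x. g x \<le> (f x::nat))
  \<Longrightarrow> x \<in> set L \<Longrightarrow> f x = g x"
proof (induction L)
  case Nil then show ?case by simp
next
  case (Cons a L)
  have le: "sum_list (map g L) \<le> sum_list (map f L)" using Cons.prems(2) by (intro sum_list_mono) auto
  have le2: "g a \<le> f a" using Cons.prems(2) by auto
  from Cons.prems(1) have eq: "f a + sum_list (map f L) = g a + sum_list (map g L)" by simp
  from le le2 eq have "f a = g a" "sum_list (map f L) = sum_list (map g L)" by linarith+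
  then show ?case using Cons by auto
qed

lemma char_matrix_entry: assumes A: "A \<in> carrier_mat n n" and r: "r < n" and s: "s < n"
  shows "(char_matrix A x * char_matrix A y) $$ (r,s) =
     (A*A)$$(r,s) - (x+y)*A$$(r,s) + (if r = s then x*y else 0)"
proof -
  have "(char_matrix A x * char_matrix A y) $$ (r,s) =
     (\<Sum>k<n. (A$$(r,k) + (if r = k then -x else 0)) * (A$$(k,s) + (if k = s then -y else 0)))"
    using A r s by (auto simp: char_matrix_def scalar_prod_def atLeast0LessThan intro!: sum.cong)
  also have "\<dots> = (\<Sum>k<n. A$$(r,k) * A$$(k,s)) + (\<Sum>k<n. if k = s then -y * A$$(r,k) else 0)
     + (\<Sum>k<n. if r = k then -x * A$$(k,s) else 0) + (\<Sum>k<n. if r = k then (if k = s then x * y else 0) else 0)"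
  proof -
    have "\<And>k. (A$$(r,k) + (if r = k then -x else 0)) * (A$$(k,s) + (if k = s then -y else 0)) =
       A$$(r,k) * A$$(k,s) + (if k = s then -y * A$$(r,k) else 0) + (if r = k then -x * A$$(k,s) else 0)
       + (if r = k then (if k = s then x * y else 0) else 0)" by (auto simp: algebra_simps)
    then show ?thesis by (simp add: sum.distrib)
  qed
  also have "\<dots> = (A*A)$$(r,s) - (x+y)*A$$(r,s) + (if r = s then x*y else 0)"
    using A r s by (auto simp: scalar_prod_def atLeast0LessThan algebra_simps)
  finally show ?thesis .
qed

lemma blocks_count: assumes "\<forall>(k,e)\<in>set xs. k = 1 \<and> (e = a1 \<or> e = a2)" and "a1 \<noteq> a2"
  shows "(\<Sum>(k,e)\<leftarrow>xs. of_nat k * e) = of_nat (length (filter (\<lambda>na. snd na = a1) xs)) * a1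
           + of_nat (length (filter (\<lambda>na. snd na = a2) xs)) * (a2::complex)"
    "length xs = length (filter (\<lambda>na. snd na = a1) xs) + length (filter (\<lambda>na. snd na = a2) xs)"
    "sum_list (map fst xs) = length xs"
    "\<And>a. sum_list (map fst (filter (\<lambda>na. snd na = a) xs)) = length (filter (\<lambda>na. snd na = a) xs)"
  using assms by (induction xs) (auto simp: algebra_simps)

lemma abstract_diag:
  fixes A :: "complex mat"
  assumes A: "A \<in> carrier_mat n n" and a12: "a1 \<noteq> a2"
   and Q: "\<And>r s. r<n \<Longrightarrow> s<n \<Longrightarrow> (A*A)$$(r,s) - (a1+a2)*A$$(r,s) + (if r=s then a1*a2 else 0) = 0"
   and tr: "mtr A = of_nat m * (a1+a2)" and n: "n = 2*m" and m: "m \<ge> 1"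
  shows "diagonalizable A \<and> (\<forall>x. eigenvalue A x \<longleftrightarrow> x=a1 \<or> x=a2) \<and> order a1 (char_poly A) = m \<and> order a2 (char_poly A) = m"
proof -
  have noneig: "\<not> eigenvalue A x" if x: "x \<noteq> a1" "x \<noteq> a2" for x
  proof
    assume "eigenvalue A x"
    hence d0: "det (char_matrix A x) = 0" using eigenvalue_det[OF A] by simp
    have "char_matrix A x * char_matrix A (a1+a2-x) = (-(x-a1)*(x-a2)) \<cdot>\<^sub>m 1\<^sub>m n"
    proof (rule eq_matI)
      fix r s assume r: "r < dim_row ((-(x-a1)*(x-a2)) \<cdot>\<^sub>m 1\<^sub>m n)" and s: "s < dim_col ((-(x-a1)*(x-a2)) \<cdot>\<^sub>m 1\<^sub>m n)"
      hence r: "r < n" and s: "s < n" by auto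
      show "(char_matrix A x * char_matrix A (a1+a2-x)) $$ (r,s) = ((-(x-a1)*(x-a2)) \<cdot>\<^sub>m 1\<^sub>m n) $$ (r,s)"
        unfolding char_matrix_entry[OF A r s] using Q[OF r s] r s by (auto simp: algebra_simps)
    qed (use A in \<open>auto simp: char_matrix_def\<close>)
    hence "det (char_matrix A x) * det (char_matrix A (a1+a2-x)) = (-(x-a1)*(x-a2))^n"
      using A by (subst det_mult[symmetric, of _ n]) (auto simp: det_smult)
    with d0 x show False by auto
  qed
  have kern: "dim_gen_eigenspace A e 2 = dim_gen_eigenspace A e 1" if e: "e = a1 \<and> e' = a2 \<or> e = a2 \<and> e' = a1" for e e'
  proof -
    let ?N = "char_matrix A e"
    have N: "?N \<in> carrier_mat n n" using A by simp
    have "?N * ?N = ((e'-e) \<cdot>\<^sub>m 1\<^sub>m n) * ?N"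
    proof (rule eq_matI)
      fix r s assume r: "r < dim_row (((e'-e) \<cdot>\<^sub>m 1\<^sub>m n) * ?N)" and s: "s < dim_col (((e'-e) \<cdot>\<^sub>m 1\<^sub>m n) * ?N)"
      hence r: "r < n" and s: "s < n" using A by (auto simp: char_matrix_def)
      have "(((e'-e) \<cdot>\<^sub>m 1\<^sub>m n) * ?N) $$ (r,s) = (e'-e) * ?N $$ (r,s)"
        using N r s by (simp add: mult_smult_assoc_mat[of _ n n])
      also have "\<dots> = (e'-e) * (A $$ (r,s) - (if r = s then e else 0))"
        using A r s by (simp add: char_matrix_def)
      finally have F: "(((e'-e) \<cdot>\<^sub>m 1\<^sub>m n) * ?N) $$ (r,s) = (e'-e) * (A $$ (r,s) - (if r = s then e else 0))" .
      have "(A * A) $$ (r, s) - (e + e) * A $$ (r, s) + (if r = s then e * e else 0) = (e'-e) * (A $$ (r,s) - (if r = s then e else 0))"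
        using Q[OF r s] e by (cases "r = s") (auto simp: algebra_simps)
      then show "(?N * ?N) $$ (r,s) = (((e'-e) \<cdot>\<^sub>m 1\<^sub>m n) * ?N) $$ (r,s)"
        unfolding char_matrix_entry[OF A r s] F .
    qed (use A in \<open>auto simp: char_matrix_def\<close>)
    have "mat_kernel (((e'-e) \<cdot>\<^sub>m 1\<^sub>m n) * ?N) = mat_kernel ?N"
      by (rule mat_kernel_mult_eq[of _ n n _ "(1/(e'-e)) \<cdot>\<^sub>m 1\<^sub>m n"]) (use N e a12 in auto)
    moreover have "?N ^\<^sub>m 2 = ?N * ?N" "?N ^\<^sub>m 1 = ?N" using N by (auto simp: numeral_2_eq_2)
    ultimately have "mat_kernel (?N ^\<^sub>m 2) = mat_kernel (?N ^\<^sub>m 1)" "dim_col (?N ^\<^sub>m 2) = dim_col (?N ^\<^sub>m 1)"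
      using \<open>?N * ?N = _\<close> N by auto
    thus ?thesis unfolding dim_gen_eigenspace_def kernel_dim_def by simp
  qed
  obtain as where "char_poly A = (\<Prod>a\<leftarrow>as. [:- a, 1:])" using char_poly_factorized[OF A] by auto
  from jordan_nf_exists[OF A this] obtain n_as where jnf: "jordan_nf A n_as" by auto
  have cp0: "char_poly A \<noteq> 0" using degree_monic_char_poly[OF A] by auto
  have blocks: "\<forall>(k,e)\<in>set n_as. k = 1 \<and> (e = a1 \<or> e = a2)"
  proof (intro ballI, clarify)
    fix k e assume ke: "(k,e) \<in> set n_as"
    have k0: "k \<noteq> 0" using jnf ke unfolding jordan_nf_def by force
    have "k \<le> order e (char_poly A)" by (rule jordan_nf_block_size_order_bound[OF jnf ke])
    hence "poly (char_poly A) e = 0" using k0 order_root by fastforce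
    hence "eigenvalue A e" using eigenvalue_root_char_poly[OF A] by simp
    hence e: "e = a1 \<or> e = a2" using noneig by blast
    then obtain e' where ee: "e = a1 \<and> e' = a2 \<or> e = a2 \<and> e' = a1" by blast
    from kern[OF ee] dim_gen_eigenspace[OF jnf, of e]
    have "sum_list (map (min 2) (map fst (filter (\<lambda>(n, ea). ea = e) n_as))) =
          sum_list (map (min 1) (map fst (filter (\<lambda>(n, ea). ea = e) n_as)))" by simp
    hence "sum_list (map (\<lambda>x. min 2 (fst x)) (filter (\<lambda>(n, ea). ea = e) n_as)) =
          sum_list (map (\<lambda>x. min 1 (fst x)) (filter (\<lambda>(n, ea). ea = e) n_as))" by (simp add: o_def)
    moreover have le: "\<forall>x. min 1 (fst x) \<le> min 2 (fst (x::nat \<times> complex))" by auto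
    ultimately have "min 2 (fst (k,e)) = min 1 (fst (k,e))" using ke by (intro sum_list_eq_le[of "\<lambda>x. min 2 (fst x)" "filter (\<lambda>(n, ea). ea = e) n_as" "\<lambda>x. min 1 (fst x)"]) auto
    hence "min 2 k = min 1 k" by simp
    with k0 e show "k = 1 \<and> (e = a1 \<or> e = a2)" by auto
  qed
  have sim: "similar_mat A (jordan_matrix n_as)" using jnf unfolding jordan_nf_def by auto
  have diag: "diagonalizable A" unfolding diagonalizable_def
    using sim jordan_diag[of n_as] blocks by fastforce
  from similar_matD[OF sim] obtain n' where "{A, jordan_matrix n_as} \<subseteq> carrier_mat n' n'" by blast
  hence "A \<in> carrier_mat n' n'" "jordan_matrix n_as \<in> carrier_mat n' n'" by auto
  with A have len: "sum_list (map fst n_as) = n" by (metis carrier_matD(1) jordan_matrix_dim(1))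
  note bc = blocks_count[OF blocks a12]
  define k1 where "k1 = length (filter (\<lambda>na. snd na = a1) n_as)"
  define k2 where "k2 = length (filter (\<lambda>na. snd na = a2) n_as)"
  have o1: "order a1 (char_poly A) = k1" unfolding jordan_nf_order[OF jnf] k1_def bc(4) ..
  have o2: "order a2 (char_poly A) = k2" unfolding jordan_nf_order[OF jnf] k2_def bc(4) ..
  have kk: "k1 + k2 = 2*m" using len bc(2,3) n k1_def k2_def by simp
  have "of_nat k1 * a1 + of_nat k2 * a2 = of_nat m * (a1 + a2)"
    using tr mtr_similar[OF sim] mtr_jordan[of n_as] bc(1) k1_def k2_def by simp
  moreover have "(of_nat k2 :: complex) = 2 * of_nat m - of_nat k1" using kk
    by (metis add_diff_cancel_left' of_nat_add of_nat_mult of_nat_numeral)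
  ultimately have "(of_nat k1 - of_nat m) * (a1 - a2) = (0::complex)" by (simp add: algebra_simps)
  with a12 have "(of_nat k1 :: complex) = of_nat m" by simp
  hence k1m: "k1 = m" by simp
  with kk have k2m: "k2 = m" by simp
  have eig: "eigenvalue A a" if "a = a1 \<or> a = a2" for a
  proof -
    have "order a (char_poly A) = m" using that o1 o2 k1m k2m by auto
    hence "poly (char_poly A) a = 0" using m order_root by fastforce
    thus ?thesis using eigenvalue_root_char_poly[OF A] by simp
  qed
  show ?thesis using diag eig noneig o1 o2 k1m k2m by blast
qed

lemma lagrange_set:
  fixes f :: "complex poly" and T :: "complex set"
  assumes T: "finite T" and deg: "degree f < card T"
  shows "(\<Sum>x\<in>T. poly f x / (\<Prod>y\<in>T-{x}. (x - y))) = coeff f (card T - 1)"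
proof -
  define d where "d x = (\<Prod>y\<in>T-{x}. (x - y))" for x
  define L where "L = (\<Sum>x\<in>T. Polynomial.smult (poly f x / d x) (\<Prod>y\<in>T-{x}. [:-y,1:]))"
  have polyL: "poly L z = poly f z" if z: "z \<in> T" for z
  proof -
    have "poly L z = (\<Sum>x\<in>T. poly f x / d x * (\<Prod>y\<in>T-{x}. (z - y)))"
      unfolding L_def by (simp add: poly_sum poly_prod)
    also have "\<dots> = (\<Sum>x\<in>{z}. poly f x / d x * (\<Prod>y\<in>T-{x}. (z - y)))"
    proof (rule sum.mono_neutral_right)
      show "\<forall>i\<in>T - {z}. poly f i / d i * (\<Prod>y\<in>T - {i}. z - y) = 0"
      proof
        fix i assume "i \<in> T - {z}"
        hence "(\<Prod>y\<in>T - {i}. z - y) = 0" using T z by (subst prod_zero_iff) auto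
        thus "poly f i / d i * (\<Prod>y\<in>T - {i}. z - y) = 0" by simp
      qed
    qed (use T z in auto)
    also have "\<dots> = poly f z" using T unfolding d_def by (simp add: prod_zero_iff)
    finally show ?thesis .
  qed
  have degL: "degree L \<le> card T - 1"
    unfolding L_def
  proof (rule degree_sum_le)
    fix x assume x: "x \<in> T"
    have "degree (\<Prod>y\<in>T-{x}. [:-y,1:]) = card (T - {x})"
      by (subst degree_prod_sum_eq) auto
    also have "\<dots> = card T - 1" using x T by simp
    finally show "degree (smult (poly f x / d x) (\<Prod>y\<in>T-{x}. [:-y,1:])) \<le> card T - 1"
      using degree_smult_le order_trans by metis
  qed (use T in auto)
  have "f - L = 0"
  proof (rule ccontr)
    assume nz: "f - L \<noteq> 0"
    have "T \<subseteq> {x. poly (f - L) x = 0}" using polyL by auto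
    hence "card T \<le> card {x. poly (f - L) x = 0}"
      using card_mono poly_roots_finite[OF nz] by blast
    also have "\<dots> \<le> degree (f - L)" by (rule card_poly_roots_bound[OF nz])
    also have "\<dots> \<le> max (degree f) (degree L)" by (rule degree_diff_le_max)
    finally show False using deg degL by auto
  qed
  hence fL: "f = L" by simp
  have "coeff f (card T - 1) = (\<Sum>x\<in>T. poly f x / d x * coeff (\<Prod>y\<in>T-{x}. [:-y,1:]) (card T - 1))"
  proof -
    have "coeff L (card T - 1) = (\<Sum>x\<in>T. poly f x / d x * coeff (\<Prod>y\<in>T-{x}. [:-y,1:]) (card T - 1))"
      unfolding L_def by (simp add: coeff_sum)
    thus ?thesis using fL by simp
  qed
  also have "\<dots> = (\<Sum>x\<in>T. poly f x / d x)"
  proof (rule sum.cong)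
    fix x assume x: "x \<in> T"
    have "degree (\<Prod>y\<in>T-{x}. [:-y,1:]) = card T - 1"
      using x T by (subst degree_prod_sum_eq) auto
    moreover have "lead_coeff (\<Prod>y\<in>T-{x}. [:-y,1:]) = 1" by (simp add: lead_coeff_prod)
    ultimately show "poly f x / d x * coeff (\<Prod>y\<in>T-{x}. [:-y,1:]) (card T - 1) = poly f x / d x"
      by simp
  qed simp
  finally show ?thesis unfolding d_def by simp
qed

lemma prod_image_remove:
  assumes "finite I" "inj_on t I" "i \<in> I"
  shows "(\<Prod>y\<in>t ` I - {t i}. g y) = (\<Prod>k\<in>I-{i}. g (t k))"
proof -
  have "t ` I - {t i} = t ` (I - {i})" using assms by (auto simp: inj_on_def)
  moreover have "inj_on t (I - {i})" using assms by (auto simp: inj_on_def)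
  ultimately show ?thesis by (simp add: prod.reindex)
qed

lemma lagrange_idx:
  fixes t :: "'a \<Rightarrow> complex"
  assumes I: "finite I" and inj: "inj_on t I" and deg: "degree f < card I"
  shows "(\<Sum>i\<in>I. poly f (t i) / (\<Prod>k\<in>I-{i}. (t i - t k))) = coeff f (card I - 1)"
proof -
  have c: "card (t ` I) = card I" using card_image[OF inj] .
  have "(\<Sum>x\<in>t ` I. poly f x / (\<Prod>y\<in>t ` I-{x}. (x - y))) = coeff f (card I - 1)"
    using lagrange_set[of "t ` I" f] I deg c by simp
  also have "(\<Sum>x\<in>t ` I. poly f x / (\<Prod>y\<in>t ` I-{x}. (x - y))) =
     (\<Sum>i\<in>I. poly f (t i) / (\<Prod>y\<in>t ` I-{t i}. (t i - y)))"
    by (simp add: sum.reindex[OF inj])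
  also have "\<dots> = (\<Sum>i\<in>I. poly f (t i) / (\<Prod>k\<in>I-{i}. (t i - t k)))"
    by (intro sum.cong refl) (simp add: prod_image_remove[OF I inj])
  finally show ?thesis .
qed

definition mc :: "complex poly \<Rightarrow> nat \<Rightarrow> complex \<Rightarrow> bool" where
  "mc p d s \<longleftrightarrow> degree p = d \<and> coeff p d = 1 \<and> (if d = 0 then s = 0 else coeff p (d-1) = -s)"

lemma mc_one: "mc 1 0 0" by (simp add: mc_def)

lemma mc_lin: assumes "mc p d s" shows "mc ([:-a,1:] * p) (d+1) (s+a)"
proof -
  have p0: "p \<noteq> 0" using assms by (auto simp: mc_def)
  have eq: "[:-a,1:] * p = Polynomial.smult (-a) p + pCons 0 p" by (simp add: mult_pCons_left)
  have deg: "degree ([:-a,1:] * p) = d + 1" using p0 assms by (subst degree_mult_eq) (auto simp: mc_def)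
  have c1: "coeff ([:-a,1:] * p) (d+1) = 1" unfolding eq using assms by (simp add: mc_def coeff_eq_0)
  have c2: "coeff ([:-a,1:] * p) d = -(s+a)" unfolding eq using assms
    by (cases d) (auto simp: mc_def)
  show ?thesis using deg c1 c2 by (simp add: mc_def)
qed

lemma mc_pl: assumes "finite K" shows "mc (\<Prod>k\<in>K. [:-R k,1:]) (card K) (\<Sum>k\<in>K. R k)"
  using assms
proof (induction K rule: finite_induct)
  case empty then show ?case by (simp add: mc_one)
next
  case (insert a K)
  then show ?case using mc_lin[OF insert.IH, of "R a"] by (simp add: add.commute)
qed

lemma lag_H:
  fixes t :: "'a \<Rightarrow> complex"
  assumes I: "finite I" and inj: "inj_on t I" and ne: "I \<noteq> {}" and f: "mc f (card I) s"
  shows "(\<Sum>i\<in>I. poly f (t i) / (\<Prod>k\<in>I-{i}. (t i - t k))) = (\<Sum>i\<in>I. t i) - s"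
proof -
  let ?n = "card I"
  have n: "?n \<ge> 1" using I ne by (simp add: Suc_le_eq card_gt_0_iff)
  define w where "w = (\<Prod>k\<in>I. [:-t k,1:])"
  have w: "mc w ?n (\<Sum>k\<in>I. t k)" unfolding w_def by (rule mc_pl[OF I])
  define g where "g = f - w"
  have cg: "coeff g ?n = 0" using f w by (simp add: g_def mc_def)
  have dg: "degree g \<le> ?n" using f w unfolding g_def mc_def
    by (metis degree_diff_le_max max.idem)
  have dg2: "degree g < ?n"
  proof (rule ccontr)
    assume "\<not> degree g < ?n"
    hence "degree g = ?n" using dg by simp
    hence "g = 0" using cg by (metis leading_coeff_0_iff)
    thus False using \<open>degree g = ?n\<close> n by simp
  qed
  have pw: "poly w (t i) = 0" if "i \<in> I" for i
    unfolding w_def poly_prod using I that by (subst prod_zero_iff) auto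
  have "(\<Sum>i\<in>I. poly g (t i) / (\<Prod>k\<in>I-{i}. (t i - t k))) = coeff g (?n - 1)"
    by (rule lagrange_idx[OF I inj dg2])
  also have "coeff g (?n - 1) = (\<Sum>i\<in>I. t i) - s" using f w n
    by (simp add: g_def mc_def)
  also have "(\<Sum>i\<in>I. poly g (t i) / (\<Prod>k\<in>I-{i}. (t i - t k))) =
     (\<Sum>i\<in>I. poly f (t i) / (\<Prod>k\<in>I-{i}. (t i - t k)))"
    by (intro sum.cong refl) (simp add: g_def pw)
  finally show ?thesis .
qed

lemma lag_one:
  fixes t :: "'a \<Rightarrow> complex"
  assumes I: "finite I" and inj: "inj_on t I" and f: "mc f d s" and d: "d + 1 = card I"
  shows "(\<Sum>i\<in>I. poly f (t i) / (\<Prod>k\<in>I-{i}. (t i - t k))) = 1"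
  using lagrange_idx[OF I inj, of f] f d by (simp add: mc_def d[symmetric])

lemma lag_G:
  fixes t :: "'a \<Rightarrow> complex"
  assumes I: "finite I" and inj: "inj_on t I" and z: "z \<notin> t ` I" and f: "mc f (card I) s"
  shows "(\<Sum>i\<in>I. poly f (t i) / ((t i - z) * (\<Prod>k\<in>I-{i}. (t i - t k)))) =
     1 - poly f z / (\<Prod>k\<in>I. (z - t k))"
proof -
  let ?T = "insert z (t ` I)"
  have cT: "card ?T = card I + 1" using z I card_image[OF inj] by simp
  have deg: "degree f < card ?T" using f cT by (simp add: mc_def)
  have "(\<Sum>x\<in>?T. poly f x / (\<Prod>y\<in>?T-{x}. (x - y))) = coeff f (card ?T - 1)"
    by (rule lagrange_set) (use I deg in auto)
  also have "coeff f (card ?T - 1) = 1" using f cT by (simp add: mc_def)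
  also have "(\<Sum>x\<in>?T. poly f x / (\<Prod>y\<in>?T-{x}. (x - y))) =
      poly f z / (\<Prod>y\<in>t ` I. (z - y)) + (\<Sum>x\<in>t ` I. poly f x / (\<Prod>y\<in>?T-{x}. (x - y)))"
    using z I by (simp add: sum.insert)
  also have "(\<Prod>y\<in>t ` I. (z - y)) = (\<Prod>k\<in>I. (z - t k))" by (simp add: prod.reindex[OF inj])
  also have "(\<Sum>x\<in>t ` I. poly f x / (\<Prod>y\<in>?T-{x}. (x - y))) =
     (\<Sum>i\<in>I. poly f (t i) / (\<Prod>y\<in>?T-{t i}. (t i - y)))"
    by (simp add: sum.reindex[OF inj])
  also have "\<dots> = (\<Sum>i\<in>I. poly f (t i) / ((t i - z) * (\<Prod>k\<in>I-{i}. (t i - t k))))"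
  proof (intro sum.cong refl)
    fix i assume i: "i \<in> I"
    have "?T - {t i} = insert z (t ` I - {t i})" using z i by auto
    hence "(\<Prod>y\<in>?T-{t i}. (t i - y)) = (t i - z) * (\<Prod>y\<in>t ` I-{t i}. (t i - y))"
      using I z by simp
    also have "\<dots> = (t i - z) * (\<Prod>k\<in>I-{i}. (t i - t k))" by (simp add: prod_image_remove[OF I inj i])
    finally show "poly f (t i) / (\<Prod>y\<in>?T-{t i}. (t i - y)) = poly f (t i) / ((t i - z) * (\<Prod>k\<in>I-{i}. (t i - t k)))"
      by simp
  qed
  finally show ?thesis by (simp add: algebra_simps)
qed

lemma prod_swap_sign: "finite A \<Longrightarrow> (\<Prod>x\<in>A. (f x - g x :: complex)) = (-1)^card A * (\<Prod>x\<in>A. (g x - f x))"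
  by (induction A rule: finite_induct) (auto simp: algebra_simps)

lemma prod_diff_nz: "inj_on X S \<Longrightarrow> i \<in> S \<Longrightarrow> K \<subseteq> S - {i} \<Longrightarrow> finite K \<Longrightarrow> (\<Prod>k\<in>K. (X i - X k :: complex)) \<noteq> 0"
  by (subst prod_zero_iff) (auto simp: inj_on_def)
lemma prod_diff_nz': "inj_on X S \<Longrightarrow> i \<in> S \<Longrightarrow> K \<subseteq> S - {i} \<Longrightarrow> finite K \<Longrightarrow> (\<Prod>k\<in>K. (X k - X i :: complex)) \<noteq> 0"
  by (subst prod_zero_iff) (auto simp: inj_on_def)

definition Qc :: "complex \<Rightarrow> complex \<Rightarrow> (nat \<Rightarrow> complex) \<Rightarrow> (nat \<Rightarrow> complex) \<Rightarrow> nat \<Rightarrow> nat \<Rightarrow> complex" where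
  "Qc a1 a2 X Y i j = X i + Y j - (a1 + a2)"

definition uc :: "nat \<Rightarrow> complex \<Rightarrow> complex \<Rightarrow> (nat \<Rightarrow> complex) \<Rightarrow> (nat \<Rightarrow> complex) \<Rightarrow> nat \<Rightarrow> complex" where
  "uc m a1 a2 X Y i = (-1)^(m+1-i) * (\<Prod>l\<in>{1..m-i}. Qc a1 a2 X Y i l) / (\<Prod>k\<in>{i+1..m-1}. (X k - X i))"
definition xc :: "nat \<Rightarrow> complex \<Rightarrow> complex \<Rightarrow> (nat \<Rightarrow> complex) \<Rightarrow> (nat \<Rightarrow> complex) \<Rightarrow> nat \<Rightarrow> complex" where
  "xc m a1 a2 X Y i = - (\<Prod>l\<in>{m+1-i..m}. Qc a1 a2 X Y i l) / (\<Prod>k\<in>{1..i-1}. (X i - X k))"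
definition vc :: "nat \<Rightarrow> complex \<Rightarrow> complex \<Rightarrow> (nat \<Rightarrow> complex) \<Rightarrow> (nat \<Rightarrow> complex) \<Rightarrow> nat \<Rightarrow> complex" where
  "vc m a1 a2 X Y j = (-1)^(m-j) * (Y j - a1) * (\<Prod>k\<in>{1..m-j}. Qc a1 a2 X Y k j) / (\<Prod>l\<in>{j+1..m}. (Y l - Y j))"
definition yc :: "nat \<Rightarrow> complex \<Rightarrow> complex \<Rightarrow> (nat \<Rightarrow> complex) \<Rightarrow> (nat \<Rightarrow> complex) \<Rightarrow> nat \<Rightarrow> complex" where
  "yc m a1 a2 X Y j = - (Y j - a2) * (\<Prod>k\<in>{m+1-j..m-1}. Qc a1 a2 X Y k j) / (\<Prod>l\<in>{1..j-1}. (Y j - Y l))"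
definition Wc :: "nat \<Rightarrow> complex \<Rightarrow> complex \<Rightarrow> (nat \<Rightarrow> complex) \<Rightarrow> (nat \<Rightarrow> complex) \<Rightarrow> nat \<Rightarrow> nat \<Rightarrow> complex" where
  "Wc m a1 a2 X Y i j = (-1)^(m-j) * (Y j - a1) * (\<Prod>l\<in>{m+1-i..m}-{j}. Qc a1 a2 X Y i l)
     * (\<Prod>k\<in>{1..m-j}-{i}. Qc a1 a2 X Y k j) / ((\<Prod>k\<in>{1..i-1}. (X i - X k)) * (\<Prod>l\<in>{j+1..m}. (Y l - Y j)))"
definition Zc :: "nat \<Rightarrow> complex \<Rightarrow> complex \<Rightarrow> (nat \<Rightarrow> complex) \<Rightarrow> (nat \<Rightarrow> complex) \<Rightarrow> nat \<Rightarrow> nat \<Rightarrow> complex" where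
  "Zc m a1 a2 X Y j i = (-1)^(m+1-i) * (Y j - a2) * (\<Prod>k\<in>{m+1-j..m-1}-{i}. Qc a1 a2 X Y k j)
     * (\<Prod>l\<in>{1..m-i}-{j}. Qc a1 a2 X Y i l) / ((\<Prod>l\<in>{1..j-1}. (Y j - Y l)) * (\<Prod>k\<in>{i+1..m-1}. (X k - X i)))"

lemma P1:
  assumes i: "1 \<le> i" "i \<le> m - 1" and injX: "inj_on X {1..m-1}"
  shows "xc m a1 a2 X Y i * uc m a1 a2 X Y i =
    - (\<Prod>l\<in>{1..m}. Qc a1 a2 X Y i l) / (\<Prod>k\<in>{1..m-1}-{i}. (X i - X k))"
proof -
  let ?Q = "Qc a1 a2 X Y i"
  have num: "(\<Prod>l\<in>{m+1-i..m}. ?Q l) * (\<Prod>l\<in>{1..m-i}. ?Q l) = (\<Prod>l\<in>{1..m}. ?Q l)"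
  proof -
    have "{1..m} = {1..m-i} \<union> {m+1-i..m}" using i by auto
    thus ?thesis by (simp add: prod.union_disjoint mult.commute)
  qed
  have d2: "(\<Prod>k\<in>{i+1..m-1}. (X k - X i)) = (-1)^(m-1-i) * (\<Prod>k\<in>{i+1..m-1}. (X i - X k))"
    by (subst prod_swap_sign) auto
  have den: "(\<Prod>k\<in>{1..i-1}. (X i - X k)) * (\<Prod>k\<in>{i+1..m-1}. (X i - X k)) = (\<Prod>k\<in>{1..m-1}-{i}. (X i - X k))"
  proof -
    have "{1..m-1}-{i} = {1..i-1} \<union> {i+1..m-1}" using i by auto
    thus ?thesis by (simp add: prod.union_disjoint)
  qed
  have nz: "(\<Prod>k\<in>{1..m-1}-{i}. (X i - X k)) \<noteq> 0"
    using injX i by (auto simp: inj_on_def)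
  have sgn: "(-1::complex)^(m+1-i) = (-1)^(m-1-i)" 
  proof -
    have "m+1-i = (m-1-i) + 2" using i by auto
    thus ?thesis by (simp add: power_add)
  qed
  have nz1: "(\<Prod>k\<in>{1..i-1}. (X i - X k)) \<noteq> 0" 
    using i by (intro prod_diff_nz[OF injX]) auto
  have nz2: "(\<Prod>k\<in>{i+1..m-1}. (X i - X k)) \<noteq> 0"
    using i by (intro prod_diff_nz[OF injX]) auto
  show ?thesis
    unfolding xc_def uc_def d2 sgn using nz1 nz2 num[symmetric] den[symmetric]
    by (simp add: field_simps)
qed

lemma P2:
  assumes j: "1 \<le> j" "j \<le> m" and injY: "inj_on Y {1..m}"
  shows "vc m a1 a2 X Y j * yc m a1 a2 X Y j =
    - (Y j - a1) * (Y j - a2) * (\<Prod>k\<in>{1..m-1}. Qc a1 a2 X Y k j) / (\<Prod>l\<in>{1..m}-{j}. (Y j - Y l))"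
proof -
  let ?Q = "\<lambda>k. Qc a1 a2 X Y k j"
  have num: "(\<Prod>k\<in>{1..m-j}. ?Q k) * (\<Prod>k\<in>{m+1-j..m-1}. ?Q k) = (\<Prod>k\<in>{1..m-1}. ?Q k)"
  proof -
    have "{1..m-1} = {1..m-j} \<union> {m+1-j..m-1}" using j by auto
    thus ?thesis by (simp add: prod.union_disjoint)
  qed
  have d1: "(\<Prod>l\<in>{j+1..m}. (Y l - Y j)) = (-1)^(m-j) * (\<Prod>l\<in>{j+1..m}. (Y j - Y l))"
    by (subst prod_swap_sign) auto
  have den: "(\<Prod>l\<in>{j+1..m}. (Y j - Y l)) * (\<Prod>l\<in>{1..j-1}. (Y j - Y l)) = (\<Prod>l\<in>{1..m}-{j}. (Y j - Y l))"
  proof -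
    have "{1..m}-{j} = {j+1..m} \<union> {1..j-1}" using j by auto
    thus ?thesis by (simp add: prod.union_disjoint)
  qed
  have nz1: "(\<Prod>l\<in>{j+1..m}. (Y j - Y l)) \<noteq> 0" using j by (intro prod_diff_nz[OF injY]) auto
  have nz2: "(\<Prod>l\<in>{1..j-1}. (Y j - Y l)) \<noteq> 0" using j by (intro prod_diff_nz[OF injY]) auto
  have s: "((-1::complex)^(m-j))^2 = 1" by (simp add: power_mult[symmetric] power_mult_distrib)
  show ?thesis
    unfolding vc_def yc_def d1 using nz1 nz2 num[symmetric] den[symmetric] s
    by (simp add: field_simps power2_eq_square)
qed

lemma prod_remove_cases: "finite A \<Longrightarrow> (if x \<in> A then g x * prod g (A - {x}) else prod g (A - {x})) = prod g A"
  by (auto simp: prod.remove)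

lemma P3:
  assumes i: "1 \<le> i" "i \<le> m - 1" and j: "1 \<le> j" "j \<le> m"
    and injX: "inj_on X {1..m-1}" and injY: "inj_on Y {1..m}"
  shows "Wc m a1 a2 X Y i j * Qc a1 a2 X Y i j = - (xc m a1 a2 X Y i * vc m a1 a2 X Y j)"
proof -
  let ?Q = "Qc a1 a2 X Y"
  have key: "(\<Prod>l\<in>{m+1-i..m}-{j}. ?Q i l) * (\<Prod>k\<in>{1..m-j}-{i}. ?Q k j) * ?Q i j
     = (\<Prod>l\<in>{m+1-i..m}. ?Q i l) * (\<Prod>k\<in>{1..m-j}. ?Q k j)"
  proof (cases "m+1-i \<le> j")
    case True
    hence "j \<in> {m+1-i..m}" "i \<notin> {1..m-j}" using j i by auto
    then show ?thesis using prod_remove_cases[of "{m+1-i..m}" j "?Q i"] by (simp add: algebra_simps)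
  next
    case False
    hence "j \<notin> {m+1-i..m}" "i \<in> {1..m-j}" using j i by auto
    then show ?thesis using prod_remove_cases[of "{1..m-j}" i "\<lambda>k. ?Q k j"] by (simp add: algebra_simps)
  qed
  have nz1: "(\<Prod>k\<in>{1..i-1}. (X i - X k)) \<noteq> 0" using i by (intro prod_diff_nz[OF injX]) auto
  have nz2: "(\<Prod>l\<in>{j+1..m}. (Y l - Y j)) \<noteq> 0" using j by (intro prod_diff_nz'[OF injY]) auto
  show ?thesis unfolding Wc_def xc_def vc_def using nz1 nz2 key
    by (simp add: field_simps)
qed

lemma alg_P4: "D3 \<noteq> 0 \<Longrightarrow> D4 \<noteq> 0 \<Longrightarrow> C1*C2*q = E1*E2 \<Longrightarrow>
   s*w*C1*C2/(D3*D4) * q = -((- w*E1/D3) * (s*E2/(D4::complex)))"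
proof -
  assume "D3 \<noteq> 0" "D4 \<noteq> 0" "C1*C2*q = E1*E2"
  hence "s*w*(C1*C2*q)/(D3*D4) = s*w*(E1*E2)/(D3*D4)" by simp
  thus ?thesis by (simp add: field_simps)
qed

lemma P4:
  assumes i: "1 \<le> i" "i \<le> m - 1" and j: "1 \<le> j" "j \<le> m"
    and injX: "inj_on X {1..m-1}" and injY: "inj_on Y {1..m}"
  shows "Zc m a1 a2 X Y j i * Qc a1 a2 X Y i j = - (yc m a1 a2 X Y j * uc m a1 a2 X Y i)"
proof -
  let ?Q = "Qc a1 a2 X Y"
  have key: "(\<Prod>k\<in>{m+1-j..m-1}-{i}. ?Q k j) * (\<Prod>l\<in>{1..m-i}-{j}. ?Q i l) * ?Q i j
     = (\<Prod>k\<in>{m+1-j..m-1}. ?Q k j) * (\<Prod>l\<in>{1..m-i}. ?Q i l)"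
  proof (cases "m+1-j \<le> i")
    case True
    hence "i \<in> {m+1-j..m-1}" "j \<notin> {1..m-i}" using j i by auto
    then show ?thesis using prod_remove_cases[of "{m+1-j..m-1}" i "\<lambda>k. ?Q k j"] by (simp add: algebra_simps)
  next
    case False
    hence "i \<notin> {m+1-j..m-1}" "j \<in> {1..m-i}" using j i by auto
    then show ?thesis using prod_remove_cases[of "{1..m-i}" j "?Q i"] by (simp add: algebra_simps)
  qed
  have nz1: "(\<Prod>l\<in>{1..j-1}. (Y j - Y l)) \<noteq> 0" using j by (intro prod_diff_nz[OF injY]) auto
  have nz2: "(\<Prod>k\<in>{i+1..m-1}. (X k - X i)) \<noteq> 0" using i by (intro prod_diff_nz'[OF injX]) auto
  show ?thesis unfolding Zc_def yc_def uc_def by (rule alg_P4[OF nz1 nz2 key])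
qed

lemma sum_split3:
  fixes m :: nat
  assumes m: "m \<ge> 1"
  shows "(\<Sum>k<2*m. f k) = f 0 + (\<Sum>i\<in>{1..m-1}. f i) + (\<Sum>j\<in>{1..m}. f (j+m-1))"
proof -
  have "{..<2*m} = insert 0 ({1..m-1} \<union> {m..<2*m})" using m by auto
  hence "(\<Sum>k<2*m. f k) = f 0 + ((\<Sum>i\<in>{1..m-1}. f i) + (\<Sum>k\<in>{m..<2*m}. f k))"
  proof -
    assume eq: "{..<2*m} = insert 0 ({1..m-1} \<union> {m..<2*m})"
    show ?thesis unfolding eq by (subst sum.insert) (auto, subst sum.union_disjoint, auto)
  qed
  also have "(\<Sum>k\<in>{m..<2*m}. f k) = (\<Sum>j\<in>{1..m}. f (j+m-1))"
    by (rule sum.reindex_bij_witness[of _ "\<lambda>j. j+m-1" "\<lambda>k. k+1-m"]) (use m in auto)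
  finally show ?thesis by (simp add: add.assoc)
qed

definition entc :: "nat \<Rightarrow> complex \<Rightarrow> complex \<Rightarrow> complex \<Rightarrow> (nat\<Rightarrow>complex) \<Rightarrow> (nat\<Rightarrow>complex) \<Rightarrow> nat \<Rightarrow> nat \<Rightarrow> complex" where
"entc m a1 a2 d0 X Y r s =
 (if r = 0 then (if s = 0 then d0 else if s < m then uc m a1 a2 X Y s else vc m a1 a2 X Y (s+1-m))
  else if r < m then (if s = 0 then xc m a1 a2 X Y r else if s < m then (if r = s then X r else 0) else Wc m a1 a2 X Y r (s+1-m))
  else (if s = 0 then yc m a1 a2 X Y (r+1-m) else if s < m then Zc m a1 a2 X Y (r+1-m) s else (if r = s then Y (r+1-m) else 0)))"

context fixes m :: nat and a1 a2 d0 :: complex and X Y :: "nat \<Rightarrow> complex"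
  assumes m1: "m \<ge> 1"
begin
abbreviation "AE4 \<equiv> entc m a1 a2 d0 X Y"
lemma e00: "AE4 0 0 = d0" by (simp add: entc_def)
lemma e0I: "i \<in> {1..m-1} \<Longrightarrow> AE4 0 i = uc m a1 a2 X Y i" by (auto simp: entc_def)
lemma e0J: "j \<in> {1..m} \<Longrightarrow> AE4 0 (j+m-1) = vc m a1 a2 X Y j" by (auto simp: entc_def)
lemma eI0: "i \<in> {1..m-1} \<Longrightarrow> AE4 i 0 = xc m a1 a2 X Y i" by (auto simp: entc_def)
lemma eII: "i \<in> {1..m-1} \<Longrightarrow> i' \<in> {1..m-1} \<Longrightarrow> AE4 i i' = (if i = i' then X i else 0)" by (auto simp: entc_def)
lemma eIJ: "i \<in> {1..m-1} \<Longrightarrow> j \<in> {1..m} \<Longrightarrow> AE4 i (j+m-1) = Wc m a1 a2 X Y i j" by (auto simp: entc_def)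
lemma eJ0: "j \<in> {1..m} \<Longrightarrow> AE4 (j+m-1) 0 = yc m a1 a2 X Y j" by (auto simp: entc_def)
lemma eJI: "j \<in> {1..m} \<Longrightarrow> i \<in> {1..m-1} \<Longrightarrow> AE4 (j+m-1) i = Zc m a1 a2 X Y j i" by (auto simp: entc_def)
lemma eJJ: "j \<in> {1..m} \<Longrightarrow> j' \<in> {1..m} \<Longrightarrow> AE4 (j+m-1) (j'+m-1) = (if j = j' then Y j else 0)" by (auto simp: entc_def)
end

definition Ec :: "nat \<Rightarrow> complex \<Rightarrow> complex \<Rightarrow> complex \<Rightarrow> (nat\<Rightarrow>complex) \<Rightarrow> (nat\<Rightarrow>complex) \<Rightarrow> nat \<Rightarrow> nat \<Rightarrow> complex" where
  "Ec m a1 a2 d0 X Y r s = (\<Sum>k<2*m. entc m a1 a2 d0 X Y r k * entc m a1 a2 d0 X Y k s)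
     - (a1+a2) * entc m a1 a2 d0 X Y r s + (if r = s then a1*a2 else 0)"

lemma prod_neg: "finite F \<Longrightarrow> (\<Prod>a\<in>F. - f a) = (-1)^card F * (\<Prod>a\<in>F. f a :: complex)"
  by (induction F rule: finite_induct) auto

context fixes m :: nat and a1 a2 d0 :: complex and X Y :: "nat \<Rightarrow> complex"
  assumes m2: "m \<ge> 2" and injX: "inj_on X {1..m-1}" and injY: "inj_on Y {1..m}"
  and trace: "d0 + (\<Sum>i\<in>{1..m-1}. X i) + (\<Sum>j\<in>{1..m}. Y j) = of_nat m * (a1+a2)"
  and gen: "\<And>i j. i \<in> {1..m-1} \<Longrightarrow> j \<in> {1..m} \<Longrightarrow> Qc a1 a2 X Y i j \<noteq> 0"
begin

abbreviation "AA \<equiv> entc m a1 a2 d0 X Y"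
abbreviation "Qa \<equiv> Qc a1 a2 X Y"
abbreviation "ua \<equiv> uc m a1 a2 X Y"
abbreviation "xa \<equiv> xc m a1 a2 X Y"
abbreviation "va \<equiv> vc m a1 a2 X Y"
abbreviation "ya \<equiv> yc m a1 a2 X Y"
abbreviation "Wa \<equiv> Wc m a1 a2 X Y"
abbreviation "Za \<equiv> Zc m a1 a2 X Y"
abbreviation "DXa i \<equiv> (\<Prod>k\<in>{1..m-1}-{i}. (X i - X k))"
abbreviation "DYa j \<equiv> (\<Prod>l\<in>{1..m}-{j}. (Y j - Y l))"
definition "fI K = [:-a1,1:] * ([:-a2,1:] * (\<Prod>k\<in>K. [:-(a1+a2 - X k),1:]))"
definition "hJ L = (\<Prod>l\<in>L. [:-(a1+a2 - Y l),1:])"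

lemma m1: "m \<ge> 1" using m2 by simp

definition "jx j = j + m - 1"

lemma E_expand: "Ec m a1 a2 d0 X Y r s = AA r 0 * AA 0 s + (\<Sum>i\<in>{1..m-1}. AA r i * AA i s)
   + (\<Sum>j\<in>{1..m}. AA r (jx j) * AA (jx j) s) - (a1+a2) * AA r s + (if r = s then a1*a2 else 0)"
  unfolding Ec_def sum_split3[OF m1] jx_def by simp

lemma f00: "AA 0 0 = d0" by (rule e00[OF m1])
lemma f0I: "i \<in> {1..m-1} \<Longrightarrow> AA 0 i = ua i" by (rule e0I[OF m1])
lemma f0J: "j \<in> {1..m} \<Longrightarrow> AA 0 (jx j) = va j" unfolding jx_def by (rule e0J[OF m1])
lemma fI0: "i \<in> {1..m-1} \<Longrightarrow> AA i 0 = xa i" by (rule eI0[OF m1])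
lemma fII: "i \<in> {1..m-1} \<Longrightarrow> i' \<in> {1..m-1} \<Longrightarrow> AA i i' = (if i = i' then X i else 0)" by (rule eII[OF m1])
lemma fIJ: "i \<in> {1..m-1} \<Longrightarrow> j \<in> {1..m} \<Longrightarrow> AA i (jx j) = Wa i j" unfolding jx_def by (rule eIJ[OF m1])
lemma fJ0: "j \<in> {1..m} \<Longrightarrow> AA (jx j) 0 = ya j" unfolding jx_def by (rule eJ0[OF m1])
lemma fJI: "j \<in> {1..m} \<Longrightarrow> i \<in> {1..m-1} \<Longrightarrow> AA (jx j) i = Za j i" unfolding jx_def by (rule eJI[OF m1])
lemma fJJ: "j \<in> {1..m} \<Longrightarrow> j' \<in> {1..m} \<Longrightarrow> AA (jx j) (jx j') = (if j = j' then Y j else 0)" unfolding jx_def by (rule eJJ[OF m1])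
lemmas fent = f00 f0I f0J fI0 fII fIJ fJ0 fJI fJJ

lemma sumI_row: assumes i: "i \<in> {1..m-1}" shows "(\<Sum>k\<in>{1..m-1}. AA i k * g k) = X i * g i"
proof -
  have "(\<Sum>k\<in>{1..m-1}. AA i k * g k) = (\<Sum>k\<in>{1..m-1}. if k = i then X i * g i else 0)"
  proof (rule sum.cong[OF refl])
    fix k assume k: "k \<in> {1..m-1}"
    show "AA i k * g k = (if k = i then X i * g i else 0)" using fII[OF i k] by auto
  qed
  also have "\<dots> = X i * g i" using i by simp
  finally show ?thesis .
qed
lemma sumI_col: assumes i: "i \<in> {1..m-1}" shows "(\<Sum>k\<in>{1..m-1}. g k * AA k i) = g i * X i"
proof -
  have "(\<Sum>k\<in>{1..m-1}. g k * AA k i) = (\<Sum>k\<in>{1..m-1}. if k = i then g i * X i else 0)"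
  proof (rule sum.cong[OF refl])
    fix k assume k: "k \<in> {1..m-1}"
    show "g k * AA k i = (if k = i then g i * X i else 0)" using fII[OF k i] by auto
  qed
  also have "\<dots> = g i * X i" using i by simp
  finally show ?thesis .
qed
lemma sumJ_row: assumes j: "j \<in> {1..m}" shows "(\<Sum>l\<in>{1..m}. AA (jx j) (jx l) * g l) = Y j * g j"
proof -
  have "(\<Sum>l\<in>{1..m}. AA (jx j) (jx l) * g l) = (\<Sum>l\<in>{1..m}. if l = j then Y j * g j else 0)"
  proof (rule sum.cong[OF refl])
    fix l assume l: "l \<in> {1..m}"
    show "AA (jx j) (jx l) * g l = (if l = j then Y j * g j else 0)" using fJJ[OF j l] by auto
  qed
  also have "\<dots> = Y j * g j" using j by simp
  finally show ?thesis .
qed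
lemma sumJ_col: assumes j: "j \<in> {1..m}" shows "(\<Sum>l\<in>{1..m}. g l * AA (jx l) (jx j)) = g j * Y j"
proof -
  have "(\<Sum>l\<in>{1..m}. g l * AA (jx l) (jx j)) = (\<Sum>l\<in>{1..m}. if l = j then g j * Y j else 0)"
  proof (rule sum.cong[OF refl])
    fix l assume l: "l \<in> {1..m}"
    show "g l * AA (jx l) (jx j) = (if l = j then g j * Y j else 0)" using fJJ[OF l j] by auto
  qed
  also have "\<dots> = g j * Y j" using j by simp
  finally show ?thesis .
qed

lemma Wg: "i \<in> {1..m-1} \<Longrightarrow> j \<in> {1..m} \<Longrightarrow> Wa i j = - (xa i * va j) / Qa i j"
  using P3[of i m j X Y a1 a2] injX injY gen[of i j] by (auto simp: field_simps)
lemma Zg: "i \<in> {1..m-1} \<Longrightarrow> j \<in> {1..m} \<Longrightarrow> Za j i = - (ya j * ua i) / Qa i j"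
  using P4[of i m j X Y a1 a2] injX injY gen[of i j] by (auto simp: field_simps)
lemma xu: "i \<in> {1..m-1} \<Longrightarrow> xa i * ua i = - (\<Prod>l\<in>{1..m}. Qa i l) / DXa i"
  using P1[of i m X a1 a2 Y] injX by auto
lemma vy: "j \<in> {1..m} \<Longrightarrow> va j * ya j = - (Y j - a1) * (Y j - a2) * (\<Prod>k\<in>{1..m-1}. Qa k j) / DYa j"
  using P2[of j m Y a1 a2 X] injY by auto

lemma poly_fI: "finite K \<Longrightarrow> poly (fI K) (Y j) = (Y j - a1) * (Y j - a2) * (\<Prod>k\<in>K. Qa k j)"
  unfolding fI_def by (simp add: poly_prod Qc_def algebra_simps)
lemma poly_hJ: "finite L \<Longrightarrow> poly (hJ L) (X i) = (\<Prod>l\<in>L. Qa i l)"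
  unfolding hJ_def by (simp add: poly_prod Qc_def algebra_simps)
lemma mc_fI: "finite K \<Longrightarrow> mc (fI K) (card K + 2) ((\<Sum>k\<in>K. (a1+a2 - X k)) + a2 + a1)"
  unfolding fI_def using mc_lin[OF mc_lin[OF mc_pl[of K "\<lambda>k. a1+a2 - X k"]], of a1 a2] by simp
lemma mc_hJ: "finite L \<Longrightarrow> mc (hJ L) (card L) (\<Sum>l\<in>L. (a1+a2 - Y l))"
  unfolding hJ_def by (rule mc_pl)

lemma QX: "Qa i j = Y j - (a1 + a2 - X i)" by (simp add: Qc_def)
lemma QY: "Qa i j = X i - (a1 + a2 - Y j)" by (simp add: Qc_def)

lemma nzDY: "j \<in> {1..m} \<Longrightarrow> DYa j \<noteq> 0" by (rule prod_diff_nz[OF injY]) auto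
lemma nzDX: "i \<in> {1..m-1} \<Longrightarrow> DXa i \<noteq> 0" by (rule prod_diff_nz[OF injX]) auto

lemma blk_II': assumes i: "i \<in> {1..m-1}" and i': "i' \<in> {1..m-1}" and ne: "i \<noteq> i'"
  shows "Ec m a1 a2 d0 X Y i i' = 0"
proof -
  let ?K = "{1..m-1} - {i, i'}"
  have "Ec m a1 a2 d0 X Y i i' = xa i * ua i' + (\<Sum>j\<in>{1..m}. Wa i j * Za j i')"
  proof -
    have "(\<Sum>k\<in>{1..m-1}. AA i k * AA k i') = X i * AA i i'" by (rule sumI_row[OF i])
    moreover have "AA i i' = 0" using fII[OF i i'] ne by simp
    moreover have "(\<Sum>j\<in>{1..m}. AA i (jx j) * AA (jx j) i') = (\<Sum>j\<in>{1..m}. Wa i j * Za j i')"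
      by (rule sum.cong[OF refl]) (simp add: fIJ[OF i] fJI[OF _ i'])
    ultimately show ?thesis unfolding E_expand using ne by (simp add: fI0[OF i] f0I[OF i'])
  qed
  also have "(\<Sum>j\<in>{1..m}. Wa i j * Za j i') = (\<Sum>j\<in>{1..m}. - (xa i * ua i') * (poly (fI ?K) (Y j) / DYa j))"
  proof (rule sum.cong[OF refl])
    fix j assume j: "j \<in> {1..m}"
    have pr: "(\<Prod>k\<in>{1..m-1}. Qa k j) = Qa i j * (Qa i' j * (\<Prod>k\<in>?K. Qa k j))"
      using i i' ne by (simp add: prod.remove[of _ i] prod.remove[of _ i'] Diff_insert2[symmetric] insert_commute)
    have nz: "Qa i j \<noteq> 0" "Qa i' j \<noteq> 0" using gen i i' j by auto
    have pf: "poly (fI ?K) (Y j) = (Y j - a1) * (Y j - a2) * (\<Prod>k\<in>?K. Qa k j)" by (rule poly_fI) simp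
    have "Wa i j * Za j i' = xa i * ua i' * (va j * ya j) / (Qa i j * Qa i' j)"
      unfolding Wg[OF i j] Zg[OF i' j] by (simp add: field_simps)
    also have "va j * ya j = (Qa i j * Qa i' j) * (- (Y j - a1) * (Y j - a2) * (\<Prod>k\<in>?K. Qa k j) / DYa j)"
      unfolding vy[OF j] pr by (simp add: field_simps)
    also have "xa i * ua i' * ((Qa i j * Qa i' j) * (- (Y j - a1) * (Y j - a2) * (\<Prod>k\<in>?K. Qa k j) / DYa j)) / (Qa i j * Qa i' j)
       = xa i * ua i' * (- (Y j - a1) * (Y j - a2) * (\<Prod>k\<in>?K. Qa k j) / DYa j)"
      using nz by simp
    finally show "Wa i j * Za j i' = - (xa i * ua i') * (poly (fI ?K) (Y j) / DYa j)"
      unfolding pf by (simp add: algebra_simps)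
  qed
  also have "\<dots> = - (xa i * ua i') * (\<Sum>j\<in>{1..m}. poly (fI ?K) (Y j) / DYa j)"
    by (simp add: sum_distrib_left)
  also have "(\<Sum>j\<in>{1..m}. poly (fI ?K) (Y j) / DYa j) = 1"
  proof (rule lag_one[OF _ injY mc_fI])
    have "card ?K = m - 3" using i i' ne by (simp add: card_Diff_subset)
    moreover have "m \<ge> 3" using i i' ne by auto
    ultimately show "card ?K + 2 + 1 = card {1..m}" by simp
  qed auto
  finally show ?thesis by simp
qed


lemma jx_ge: "j \<in> {1..m} \<Longrightarrow> jx j \<ge> m" unfolding jx_def by auto
lemma jx_inj: "jx j = jx j' \<Longrightarrow> j \<in> {1..m} \<Longrightarrow> j' \<in> {1..m} \<Longrightarrow> j = j'" unfolding jx_def by auto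

lemma blk_IJ: assumes i: "i \<in> {1..m-1}" and j: "j \<in> {1..m}"
  shows "Ec m a1 a2 d0 X Y i (jx j) = 0"
proof -
  have ne: "i \<noteq> jx j" using jx_ge[OF j] i by auto
  have "Ec m a1 a2 d0 X Y i (jx j) = xa i * va j + X i * Wa i j + Wa i j * Y j - (a1+a2) * Wa i j"
    unfolding E_expand sumI_row[OF i] sumJ_col[OF j] using ne by (simp add: fI0[OF i] f0J[OF j] fIJ[OF i j])
  also have "\<dots> = xa i * va j + Wa i j * Qa i j" by (simp add: Qc_def algebra_simps)
  also have "\<dots> = 0" using P3[of i m j X Y a1 a2] i j injX injY by simp
  finally show ?thesis .
qed

lemma blk_JI: assumes i: "i \<in> {1..m-1}" and j: "j \<in> {1..m}"
  shows "Ec m a1 a2 d0 X Y (jx j) i = 0"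
proof -
  have ne: "jx j \<noteq> i" using jx_ge[OF j] i by auto
  have "Ec m a1 a2 d0 X Y (jx j) i = ya j * ua i + Za j i * X i + Y j * Za j i - (a1+a2) * Za j i"
    unfolding E_expand sumI_col[OF i] sumJ_row[OF j] using ne by (simp add: fJ0[OF j] f0I[OF i] fJI[OF j i])
  also have "\<dots> = ya j * ua i + Za j i * Qa i j" by (simp add: Qc_def algebra_simps)
  also have "\<dots> = 0" using P4[of i m j X Y a1 a2] i j injX injY by simp
  finally show ?thesis .
qed

lemma sum_XK: assumes i: "i \<in> {1..m-1}"
  shows "(\<Sum>k\<in>{1..m-1}-{i}. (a1+a2 - X k)) = of_nat (m-2) * (a1+a2) - ((\<Sum>k\<in>{1..m-1}. X k) - X i)"
proof -
  have c: "card ({1..m-1}-{i}) = m - 2" using i by auto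
  have "(\<Sum>k\<in>{1..m-1}. X k) = X i + (\<Sum>k\<in>{1..m-1}-{i}. X k)" using i by (simp add: sum.remove)
  thus ?thesis using c by (simp add: sum_subtractf)
qed

lemma sum_YL: assumes j: "j \<in> {1..m}"
  shows "(\<Sum>l\<in>{1..m}-{j}. (a1+a2 - Y l)) = of_nat (m-1) * (a1+a2) - ((\<Sum>l\<in>{1..m}. Y l) - Y j)"
proof -
  have c: "card ({1..m}-{j}) = m - 1" using j by auto
  have "(\<Sum>l\<in>{1..m}. Y l) = Y j + (\<Sum>l\<in>{1..m}-{j}. Y l)" using j by (simp add: sum.remove)
  thus ?thesis using c by (simp add: sum_subtractf)
qed

lemma ofnat_m2: "(of_nat (m-2) :: complex) = of_nat m - 2" using m2 by (simp add: of_nat_diff)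
lemma ofnat_m1: "(of_nat (m-1) :: complex) = of_nat m - 1" using m2 by (simp add: of_nat_diff)

lemma sumJ_I: assumes i: "i \<in> {1..m-1}"
  shows "(\<Sum>j\<in>{1..m}. - (va j * ya j) / Qa i j) = - (d0 + X i - (a1+a2))"
proof -
  let ?K = "{1..m-1}-{i}"
  have "(\<Sum>j\<in>{1..m}. - (va j * ya j) / Qa i j) = (\<Sum>j\<in>{1..m}. poly (fI ?K) (Y j) / (\<Prod>l\<in>{1..m}-{j}. (Y j - Y l)))"
  proof (rule sum.cong[OF refl])
    fix j assume j: "j \<in> {1..m}"
    have pr: "(\<Prod>k\<in>{1..m-1}. Qa k j) = Qa i j * (\<Prod>k\<in>?K. Qa k j)" using i by (simp add: prod.remove)
    have nz: "Qa i j \<noteq> 0" using gen i j by auto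
    have pf: "poly (fI ?K) (Y j) = (Y j - a1) * (Y j - a2) * (\<Prod>k\<in>?K. Qa k j)" by (rule poly_fI) simp
    have "- (va j * ya j) / Qa i j = Qa i j * ((Y j - a1) * (Y j - a2) * (\<Prod>k\<in>?K. Qa k j) / DYa j) / Qa i j"
      unfolding vy[OF j] pr using nz nzDY[OF j] by (simp add: field_simps)
    also have "\<dots> = (Y j - a1) * (Y j - a2) * (\<Prod>k\<in>?K. Qa k j) / DYa j" using nz by simp
    finally show "- (va j * ya j) / Qa i j = poly (fI ?K) (Y j) / (\<Prod>l\<in>{1..m}-{j}. (Y j - Y l))" unfolding pf .
  qed
  also have "\<dots> = (\<Sum>j\<in>{1..m}. Y j) - ((\<Sum>k\<in>?K. (a1+a2 - X k)) + a2 + a1)"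
  proof (rule lag_H[OF _ injY])
    have "card ?K + 2 = card {1..m}" using i m2 by auto
    thus "mc (fI ?K) (card {1..m}) ((\<Sum>k\<in>?K. (a1+a2 - X k)) + a2 + a1)" using mc_fI[of ?K] by simp
  qed (use m2 in auto)
  also have "\<dots> = - (d0 + X i - (a1+a2))" unfolding sum_XK[OF i] ofnat_m2 using trace
    by (simp add: algebra_simps)
  finally show ?thesis .
qed

lemma sumI_J: assumes j: "j \<in> {1..m}"
  shows "(\<Sum>i\<in>{1..m-1}. - (xa i * ua i) / Qa i j) = - (d0 + Y j - (a1+a2))"
proof -
  let ?L = "{1..m}-{j}"
  have "(\<Sum>i\<in>{1..m-1}. - (xa i * ua i) / Qa i j) = (\<Sum>i\<in>{1..m-1}. poly (hJ ?L) (X i) / (\<Prod>k\<in>{1..m-1}-{i}. (X i - X k)))"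
  proof (rule sum.cong[OF refl])
    fix i assume i: "i \<in> {1..m-1}"
    have pr: "(\<Prod>l\<in>{1..m}. Qa i l) = Qa i j * (\<Prod>l\<in>?L. Qa i l)" using j by (simp add: prod.remove)
    have nz: "Qa i j \<noteq> 0" using gen i j by auto
    have pf: "poly (hJ ?L) (X i) = (\<Prod>l\<in>?L. Qa i l)" by (rule poly_hJ) simp
    have "- (xa i * ua i) / Qa i j = Qa i j * ((\<Prod>l\<in>?L. Qa i l) / DXa i) / Qa i j"
      unfolding xu[OF i] pr using nz nzDX[OF i] by (simp add: field_simps)
    also have "\<dots> = (\<Prod>l\<in>?L. Qa i l) / DXa i" using nz by simp
    finally show "- (xa i * ua i) / Qa i j = poly (hJ ?L) (X i) / (\<Prod>k\<in>{1..m-1}-{i}. (X i - X k))" unfolding pf .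
  qed
  also have "\<dots> = (\<Sum>i\<in>{1..m-1}. X i) - (\<Sum>l\<in>?L. (a1+a2 - Y l))"
  proof (rule lag_H[OF _ injX])
    have "card ?L = card {1..m-1}" using j m2 by auto
    thus "mc (hJ ?L) (card {1..m-1}) (\<Sum>l\<in>?L. (a1+a2 - Y l))" using mc_hJ[of ?L] by simp
  qed (use m2 in auto)
  also have "\<dots> = - (d0 + Y j - (a1+a2))" unfolding sum_YL[OF j] ofnat_m1 using trace
    by (simp add: algebra_simps)
  finally show ?thesis .
qed

lemma blk_0I: assumes i: "i \<in> {1..m-1}" shows "Ec m a1 a2 d0 X Y 0 i = 0"
proof -
  have "(\<Sum>j\<in>{1..m}. AA 0 (jx j) * AA (jx j) i) = ua i * (\<Sum>j\<in>{1..m}. - (va j * ya j) / Qa i j)"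
    unfolding sum_distrib_left
    by (rule sum.cong[OF refl]) (simp add: f0J fJI[OF _ i] Zg[OF i] field_simps)
  hence "Ec m a1 a2 d0 X Y 0 i = d0 * ua i + ua i * X i + ua i * (- (d0 + X i - (a1+a2))) - (a1+a2) * ua i"
    unfolding E_expand sumI_col[OF i] sumJ_I[OF i] using i by (simp add: fent)
  thus ?thesis by (simp add: algebra_simps)
qed

lemma blk_I0: assumes i: "i \<in> {1..m-1}" shows "Ec m a1 a2 d0 X Y i 0 = 0"
proof -
  have "(\<Sum>j\<in>{1..m}. AA i (jx j) * AA (jx j) 0) = xa i * (\<Sum>j\<in>{1..m}. - (va j * ya j) / Qa i j)"
    unfolding sum_distrib_left
    by (rule sum.cong[OF refl]) (simp add: fJ0 fIJ[OF i] Wg[OF i] field_simps)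
  hence "Ec m a1 a2 d0 X Y i 0 = xa i * d0 + X i * xa i + xa i * (- (d0 + X i - (a1+a2))) - (a1+a2) * xa i"
    unfolding E_expand sumI_row[OF i] sumJ_I[OF i] using i by (simp add: fent)
  thus ?thesis by (simp add: algebra_simps)
qed

lemma blk_0J: assumes j: "j \<in> {1..m}" shows "Ec m a1 a2 d0 X Y 0 (jx j) = 0"
proof -
  have ne: "0 \<noteq> jx j" using jx_ge[OF j] m2 by auto
  have "(\<Sum>i\<in>{1..m-1}. AA 0 i * AA i (jx j)) = va j * (\<Sum>i\<in>{1..m-1}. - (xa i * ua i) / Qa i j)"
    unfolding sum_distrib_left
    by (rule sum.cong[OF refl]) (simp add: f0I fIJ[OF _ j] Wg[OF _ j] field_simps)
  hence "Ec m a1 a2 d0 X Y 0 (jx j) = d0 * va j + va j * (- (d0 + Y j - (a1+a2))) + va j * Y j - (a1+a2) * va j"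
    unfolding E_expand sumJ_col[OF j] sumI_J[OF j] using j ne by (simp add: fent)
  thus ?thesis by (simp add: algebra_simps)
qed

lemma blk_J0: assumes j: "j \<in> {1..m}" shows "Ec m a1 a2 d0 X Y (jx j) 0 = 0"
proof -
  have ne: "jx j \<noteq> 0" using jx_ge[OF j] m2 by auto
  have "(\<Sum>i\<in>{1..m-1}. AA (jx j) i * AA i 0) = ya j * (\<Sum>i\<in>{1..m-1}. - (xa i * ua i) / Qa i j)"
    unfolding sum_distrib_left
    by (rule sum.cong[OF refl]) (simp add: fI0 fJI[OF j] Zg[OF _ j] field_simps)
  hence "Ec m a1 a2 d0 X Y (jx j) 0 = ya j * d0 + ya j * (- (d0 + Y j - (a1+a2))) + Y j * ya j - (a1+a2) * ya j"
    unfolding E_expand sumJ_row[OF j] sumI_J[OF j] using j ne by (simp add: fent)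
  thus ?thesis by (simp add: algebra_simps)
qed

lemma sgn_m2: "(-1::complex)^m = (-1)^(m-2)"
proof -
  have "m = (m-2) + 2" using m2 by simp
  hence "(-1::complex)^m = (-1)^(m-2) * (-1)^2" by (metis power_add)
  thus ?thesis by simp
qed

lemma blk_II: assumes i: "i \<in> {1..m-1}" shows "Ec m a1 a2 d0 X Y i i = 0"
proof -
  let ?K = "{1..m-1} - {i}"
  let ?z = "a1 + a2 - X i"
  let ?PQ = "\<Prod>l\<in>{1..m}. Qa i l"
  have PQ: "?PQ \<noteq> 0" using gen i by (subst prod_zero_iff) auto
  have DXa: "DXa i \<noteq> 0" by (rule nzDX[OF i])
  have E: "Ec m a1 a2 d0 X Y i i = xa i * ua i + X i * X i + (\<Sum>j\<in>{1..m}. Wa i j * Za j i) - (a1+a2) * X i + a1 * a2"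
  proof -
    have "(\<Sum>j\<in>{1..m}. AA i (jx j) * AA (jx j) i) = (\<Sum>j\<in>{1..m}. Wa i j * Za j i)"
      by (rule sum.cong[OF refl]) (simp add: fIJ[OF i] fJI[OF _ i])
    thus ?thesis unfolding E_expand sumI_row[OF i] by (simp add: fI0[OF i] f0I[OF i] fII[OF i i])
  qed
  have "(\<Sum>j\<in>{1..m}. Wa i j * Za j i) = (\<Sum>j\<in>{1..m}. - (xa i * ua i) * (poly (fI ?K) (Y j) / ((Y j - ?z) * DYa j)))"
  proof (rule sum.cong[OF refl])
    fix j assume j: "j \<in> {1..m}"
    have pr: "(\<Prod>k\<in>{1..m-1}. Qa k j) = Qa i j * (\<Prod>k\<in>?K. Qa k j)" using i by (simp add: prod.remove)
    have nz: "Qa i j \<noteq> 0" using gen i j by auto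
    have pf: "poly (fI ?K) (Y j) = (Y j - a1) * (Y j - a2) * (\<Prod>k\<in>?K. Qa k j)" by (rule poly_fI) simp
    have Qz: "Y j - ?z = Qa i j" by (simp add: Qc_def)
    have "Wa i j * Za j i = xa i * ua i * (va j * ya j) / (Qa i j * Qa i j)"
      unfolding Wg[OF i j] Zg[OF i j] by (simp add: field_simps)
    also have "va j * ya j = Qa i j * (- (Y j - a1) * (Y j - a2) * (\<Prod>k\<in>?K. Qa k j) / DYa j)"
      unfolding vy[OF j] pr by (simp add: field_simps)
    also have "xa i * ua i * (Qa i j * (- (Y j - a1) * (Y j - a2) * (\<Prod>k\<in>?K. Qa k j) / DYa j)) / (Qa i j * Qa i j)
       = xa i * ua i * (- (Y j - a1) * (Y j - a2) * (\<Prod>k\<in>?K. Qa k j) / (Qa i j * DYa j))"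
      using nz by (simp add: ac_simps)
    finally show "Wa i j * Za j i = - (xa i * ua i) * (poly (fI ?K) (Y j) / ((Y j - ?z) * DYa j))"
      unfolding pf Qz by (simp add: algebra_simps)
  qed
  also have "\<dots> = - (xa i * ua i) * (\<Sum>j\<in>{1..m}. poly (fI ?K) (Y j) / ((Y j - ?z) * DYa j))"
    by (simp add: sum_distrib_left)
  also have "(\<Sum>j\<in>{1..m}. poly (fI ?K) (Y j) / ((Y j - ?z) * DYa j)) = 1 - poly (fI ?K) ?z / (\<Prod>l\<in>{1..m}. (?z - Y l))"
  proof (rule lag_G[OF _ injY])
    show "?z \<notin> Y ` {1..m}"
    proof
      assume "?z \<in> Y ` {1..m}"
      then obtain j where j: "j \<in> {1..m}" "?z = Y j" by auto
      hence "Qa i j = 0" unfolding Qc_def using j(2)[symmetric] by (simp add: algebra_simps)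
      with gen[OF i j(1)] show False by simp
    qed
    have "card ?K + 2 = card {1..m}" using i m2 by auto
    thus "mc (fI ?K) (card {1..m}) ((\<Sum>k\<in>?K. (a1+a2 - X k)) + a2 + a1)" using mc_fI[of ?K] by simp
  qed auto
  also have "poly (fI ?K) ?z = (X i - a1) * (X i - a2) * ((-1)^(m-2) * DXa i)"
  proof -
    have "poly (fI ?K) ?z = (?z - a1) * (?z - a2) * (\<Prod>k\<in>?K. (X k - X i))"
      unfolding fI_def by (simp add: poly_prod algebra_simps)
    also have "(\<Prod>k\<in>?K. (X k - X i)) = (-1)^(m-2) * DXa i"
    proof -
      have "(\<Prod>k\<in>?K. (X k - X i)) = (-1)^card ?K * DXa i" by (rule prod_swap_sign) simp
      also have "card ?K = m - 2" using i by auto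
      finally show ?thesis .
    qed
    finally show ?thesis by (simp add: algebra_simps)
  qed
  also have "(\<Prod>l\<in>{1..m}. (?z - Y l)) = (-1)^(m-2) * ?PQ"
  proof -
    have "(\<Prod>l\<in>{1..m}. (?z - Y l)) = (\<Prod>l\<in>{1..m}. - Qa i l)" by (intro prod.cong) (auto simp: Qc_def)
    also have "\<dots> = (-1)^m * ?PQ" by (subst prod_neg) auto
    finally show ?thesis using sgn_m2 by simp
  qed
  finally have S: "(\<Sum>j\<in>{1..m}. Wa i j * Za j i) = - (xa i * ua i) *
     (1 - (X i - a1) * (X i - a2) * ((-1)^(m-2) * DXa i) / ((-1)^(m-2) * ?PQ))" .
  have sg: "((-1::complex)^(m-2)) \<noteq> 0" by simp
  show ?thesis unfolding E S xu[OF i] using PQ DXa sg by (simp add: field_simps)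
qed

lemma blk_JJ': assumes j: "j \<in> {1..m}" and j': "j' \<in> {1..m}" and ne: "j \<noteq> j'"
  shows "Ec m a1 a2 d0 X Y (jx j) (jx j') = 0"
proof -
  let ?L = "{1..m} - {j, j'}"
  have nejx: "jx j \<noteq> jx j'" using jx_inj j j' ne by blast
  have "Ec m a1 a2 d0 X Y (jx j) (jx j') = ya j * va j' + (\<Sum>i\<in>{1..m-1}. Za j i * Wa i j')"
  proof -
    have "(\<Sum>i\<in>{1..m-1}. AA (jx j) i * AA i (jx j')) = (\<Sum>i\<in>{1..m-1}. Za j i * Wa i j')"
      by (rule sum.cong[OF refl]) (simp add: fIJ[OF _ j'] fJI[OF j])
    moreover have "AA (jx j) (jx j') = 0" using fJJ[OF j j'] ne by simp
    ultimately show ?thesis unfolding E_expand sumJ_row[OF j] using nejx by (simp add: fJ0[OF j] f0J[OF j'])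
  qed
  also have "(\<Sum>i\<in>{1..m-1}. Za j i * Wa i j') = (\<Sum>i\<in>{1..m-1}. - (ya j * va j') * (poly (hJ ?L) (X i) / DXa i))"
  proof (rule sum.cong[OF refl])
    fix i assume i: "i \<in> {1..m-1}"
    have pr: "(\<Prod>l\<in>{1..m}. Qa i l) = Qa i j * (Qa i j' * (\<Prod>l\<in>?L. Qa i l))"
      using j j' ne by (simp add: prod.remove[of _ j] prod.remove[of _ j'] Diff_insert2[symmetric] insert_commute)
    have nz: "Qa i j \<noteq> 0" "Qa i j' \<noteq> 0" using gen i j j' by auto
    have pf: "poly (hJ ?L) (X i) = (\<Prod>l\<in>?L. Qa i l)" by (rule poly_hJ) simp
    have "Za j i * Wa i j' = ya j * va j' * (xa i * ua i) / (Qa i j * Qa i j')"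
      unfolding Wg[OF i j'] Zg[OF i j] by (simp add: field_simps)
    also have "xa i * ua i = (Qa i j * Qa i j') * (- (\<Prod>l\<in>?L. Qa i l) / DXa i)"
      unfolding xu[OF i] pr by (simp add: field_simps)
    also have "ya j * va j' * ((Qa i j * Qa i j') * (- (\<Prod>l\<in>?L. Qa i l) / DXa i)) / (Qa i j * Qa i j')
       = ya j * va j' * (- (\<Prod>l\<in>?L. Qa i l) / DXa i)"
      using nz by simp
    finally show "Za j i * Wa i j' = - (ya j * va j') * (poly (hJ ?L) (X i) / DXa i)"
      unfolding pf by (simp add: algebra_simps)
  qed
  also have "\<dots> = - (ya j * va j') * (\<Sum>i\<in>{1..m-1}. poly (hJ ?L) (X i) / DXa i)"
    by (simp add: sum_distrib_left)
  also have "(\<Sum>i\<in>{1..m-1}. poly (hJ ?L) (X i) / DXa i) = 1"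
  proof (rule lag_one[OF _ injX mc_hJ])
    have "card ?L = m - 2" using j j' ne by (simp add: card_Diff_subset)
    thus "card ?L + 1 = card {1..m-1}" using m2 by simp
  qed auto
  finally show ?thesis by simp
qed

lemma blk_JJ: assumes j: "j \<in> {1..m}" shows "Ec m a1 a2 d0 X Y (jx j) (jx j) = 0"
proof -
  let ?L = "{1..m} - {j}"
  let ?z = "a1 + a2 - Y j"
  let ?PQ = "\<Prod>k\<in>{1..m-1}. Qa k j"
  have PQ: "?PQ \<noteq> 0" using gen j by (subst prod_zero_iff) auto
  have DYa: "DYa j \<noteq> 0" by (rule nzDY[OF j])
  have E: "Ec m a1 a2 d0 X Y (jx j) (jx j) = ya j * va j + (\<Sum>i\<in>{1..m-1}. Za j i * Wa i j) + Y j * Y j - (a1+a2) * Y j + a1 * a2"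
  proof -
    have "(\<Sum>i\<in>{1..m-1}. AA (jx j) i * AA i (jx j)) = (\<Sum>i\<in>{1..m-1}. Za j i * Wa i j)"
      by (rule sum.cong[OF refl]) (simp add: fIJ[OF _ j] fJI[OF j])
    thus ?thesis unfolding E_expand sumJ_row[OF j] by (simp add: fJ0[OF j] f0J[OF j] fJJ[OF j j])
  qed
  have "(\<Sum>i\<in>{1..m-1}. Za j i * Wa i j) = (\<Sum>i\<in>{1..m-1}. - (ya j * va j) * (poly (hJ ?L) (X i) / ((X i - ?z) * DXa i)))"
  proof (rule sum.cong[OF refl])
    fix i assume i: "i \<in> {1..m-1}"
    have pr: "(\<Prod>l\<in>{1..m}. Qa i l) = Qa i j * (\<Prod>l\<in>?L. Qa i l)" using j by (simp add: prod.remove)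
    have nz: "Qa i j \<noteq> 0" using gen i j by auto
    have pf: "poly (hJ ?L) (X i) = (\<Prod>l\<in>?L. Qa i l)" by (rule poly_hJ) simp
    have Qz: "X i - ?z = Qa i j" by (simp add: Qc_def)
    have "Za j i * Wa i j = ya j * va j * (xa i * ua i) / (Qa i j * Qa i j)"
      unfolding Wg[OF i j] Zg[OF i j] by (simp add: field_simps)
    also have "xa i * ua i = Qa i j * (- (\<Prod>l\<in>?L. Qa i l) / DXa i)"
      unfolding xu[OF i] pr by (simp add: field_simps)
    also have "ya j * va j * (Qa i j * (- (\<Prod>l\<in>?L. Qa i l) / DXa i)) / (Qa i j * Qa i j)
       = ya j * va j * (- (\<Prod>l\<in>?L. Qa i l) / (Qa i j * DXa i))"
      using nz by (simp add: ac_simps)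
    finally show "Za j i * Wa i j = - (ya j * va j) * (poly (hJ ?L) (X i) / ((X i - ?z) * DXa i))"
      unfolding pf Qz by (simp add: algebra_simps)
  qed
  also have "\<dots> = - (ya j * va j) * (\<Sum>i\<in>{1..m-1}. poly (hJ ?L) (X i) / ((X i - ?z) * DXa i))"
    by (simp add: sum_distrib_left)
  also have "(\<Sum>i\<in>{1..m-1}. poly (hJ ?L) (X i) / ((X i - ?z) * DXa i)) = 1 - poly (hJ ?L) ?z / (\<Prod>k\<in>{1..m-1}. (?z - X k))"
  proof (rule lag_G[OF _ injX])
    show "?z \<notin> X ` {1..m-1}"
    proof
      assume "?z \<in> X ` {1..m-1}"
      then obtain i where i: "i \<in> {1..m-1}" "?z = X i" by auto
      hence "Qa i j = 0" unfolding Qc_def using i(2)[symmetric] by (simp add: algebra_simps)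
      with gen[OF i(1) j] show False by simp
    qed
    have "card ?L = card {1..m-1}" using j m2 by auto
    thus "mc (hJ ?L) (card {1..m-1}) (\<Sum>l\<in>?L. (a1+a2 - Y l))" using mc_hJ[of ?L] by simp
  qed auto
  also have "poly (hJ ?L) ?z = (-1)^(m-1) * DYa j"
  proof -
    have "poly (hJ ?L) ?z = (\<Prod>l\<in>?L. (Y l - Y j))"
      unfolding hJ_def by (simp add: poly_prod algebra_simps)
    also have "\<dots> = (-1)^(m-1) * DYa j" using j by (subst prod_swap_sign) auto
    finally show ?thesis .
  qed
  also have "(\<Prod>k\<in>{1..m-1}. (?z - X k)) = (-1)^(m-1) * ?PQ"
  proof -
    have "(\<Prod>k\<in>{1..m-1}. (?z - X k)) = (\<Prod>k\<in>{1..m-1}. - Qa k j)" by (intro prod.cong) (auto simp: Qc_def)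
    also have "\<dots> = (-1)^(m-1) * ?PQ" by (subst prod_neg) auto
    finally show ?thesis .
  qed
  finally have S: "(\<Sum>i\<in>{1..m-1}. Za j i * Wa i j) = - (ya j * va j) *
     (1 - (-1)^(m-1) * DYa j / ((-1)^(m-1) * ?PQ))" .
  have sg: "((-1::complex)^(m-1)) \<noteq> 0" by simp
  have vy': "ya j * va j = - (Y j - a1) * (Y j - a2) * ?PQ / DYa j" using vy[OF j] by (simp add: mult.commute)
  show ?thesis unfolding E S vy' using PQ DYa sg by (simp add: field_simps)
qed

lemma idx_cases:
  assumes "r < 2*m"
  obtains "r = 0" | "r \<in> {1..m-1}" | j where "j \<in> {1..m}" "r = jx j"
proof -
  consider "r = 0" | "r \<in> {1..m-1}" | "r \<ge> m" by force
  then show ?thesis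
  proof cases
    case 3
    hence "r + 1 - m \<in> {1..m}" "r = jx (r + 1 - m)" using assms by (auto simp: jx_def)
    thus ?thesis using that by blast
  qed (use that in auto)
qed

lemma nonzero_blocks: assumes r: "r < 2*m" and s: "s < 2*m" and ne: "\<not> (r = 0 \<and> s = 0)"
  shows "Ec m a1 a2 d0 X Y r s = 0"
proof -
  from r show ?thesis
  proof (cases rule: idx_cases)
    case 1
    from s show ?thesis
    proof (cases rule: idx_cases)
      case 1 with ne \<open>r = 0\<close> show ?thesis by simp
    next
      case 2 then show ?thesis using \<open>r = 0\<close> blk_0I by simp
    next
      case (3 j) then show ?thesis using \<open>r = 0\<close> blk_0J by simp
    qed
  next
    case 2
    from s show ?thesis
    proof (cases rule: idx_cases)
      case 1 then show ?thesis using 2 blk_I0 by simp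
    next
      case 3: 2 then show ?thesis using 2 blk_II blk_II' by (cases "r = s") auto
    next
      case (3 j) then show ?thesis using 2 blk_IJ by simp
    qed
  next
    case (3 j)
    from s show ?thesis
    proof (cases rule: idx_cases)
      case 1 then show ?thesis using 3 blk_J0 by simp
    next
      case 2 then show ?thesis using 3 blk_JI by simp
    next
      case (3 j') then show ?thesis using \<open>j \<in> {1..m}\<close> \<open>r = jx j\<close> blk_JJ blk_JJ' by (cases "j = j'") auto
    qed
  qed
qed

lemma comm_sum: assumes r: "r < 2*m" and s: "s < 2*m"
  shows "(\<Sum>k<2*m. AA r k * Ec m a1 a2 d0 X Y k s) = (\<Sum>k<2*m. Ec m a1 a2 d0 X Y r k * AA k s)"
proof -
  have L: "(\<Sum>k<2*m. AA r k * Ec m a1 a2 d0 X Y k s) =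
     (\<Sum>k<2*m. \<Sum>l<2*m. AA r k * AA k l * AA l s) - (a1+a2) * (\<Sum>k<2*m. AA r k * AA k s) + a1 * a2 * AA r s"
  proof -
    have "(\<Sum>k<2*m. AA r k * Ec m a1 a2 d0 X Y k s) = (\<Sum>k<2*m. (\<Sum>l<2*m. AA r k * AA k l * AA l s)
       - (a1+a2) * (AA r k * AA k s) + (if k = s then a1 * a2 * AA r s else 0))"
      unfolding Ec_def by (intro sum.cong refl) (auto simp: algebra_simps sum_distrib_left)
    also have "\<dots> = (\<Sum>k<2*m. \<Sum>l<2*m. AA r k * AA k l * AA l s) - (a1+a2) * (\<Sum>k<2*m. AA r k * AA k s)
       + (\<Sum>k<2*m. if k = s then a1 * a2 * AA r s else 0)"
      by (simp add: sum.distrib sum_subtractf sum_distrib_left)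
    also have "(\<Sum>k<2*m. if k = s then a1 * a2 * AA r s else 0) = a1 * a2 * AA r s"
      using s by simp
    finally show ?thesis .
  qed
  have R: "(\<Sum>k<2*m. Ec m a1 a2 d0 X Y r k * AA k s) =
     (\<Sum>k<2*m. \<Sum>l<2*m. AA r l * AA l k * AA k s) - (a1+a2) * (\<Sum>k<2*m. AA r k * AA k s) + a1 * a2 * AA r s"
  proof -
    have "(\<Sum>k<2*m. Ec m a1 a2 d0 X Y r k * AA k s) = (\<Sum>k<2*m. (\<Sum>l<2*m. AA r l * AA l k) * AA k s
       - (a1+a2) * (AA r k * AA k s) + (if k = r then a1 * a2 * AA r s else 0))"
      unfolding Ec_def by (intro sum.cong refl) (auto simp: ring_distribs mult.assoc)
    also have "\<dots> = (\<Sum>k<2*m. \<Sum>l<2*m. AA r l * AA l k * AA k s) - (a1+a2) * (\<Sum>k<2*m. AA r k * AA k s)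
       + (\<Sum>k<2*m. if k = r then a1 * a2 * AA r s else 0)"
      by (simp add: sum.distrib sum_subtractf sum_distrib_left sum_distrib_right)
    also have "(\<Sum>k<2*m. if k = r then a1 * a2 * AA r s else 0) = a1 * a2 * AA r s"
      using r by simp
    finally show ?thesis .
  qed
  have "(\<Sum>k<2*m. \<Sum>l<2*m. AA r l * AA l k * AA k s) = (\<Sum>l<2*m. \<Sum>k<2*m. AA r l * AA l k * AA k s)"
    by (rule sum.swap)
  thus ?thesis unfolding L R by simp
qed

lemma blk_00: "Ec m a1 a2 d0 X Y 0 0 = 0"
proof -
  have one: "(1::nat) \<in> {1..m-1}" using m2 by auto
  have r: "1 < 2*m" and z: "0 < 2*m" using m2 by auto
  have "(\<Sum>k<2*m. AA 1 k * Ec m a1 a2 d0 X Y k 0) = AA 1 0 * Ec m a1 a2 d0 X Y 0 0"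
    by (subst sum.remove[of _ 0]) (use z in \<open>auto intro!: sum.neutral nonzero_blocks\<close>)
  moreover have "(\<Sum>k<2*m. Ec m a1 a2 d0 X Y 1 k * AA k 0) = 0"
    using m2 by (intro sum.neutral) (auto intro!: nonzero_blocks)
  ultimately have "AA 1 0 * Ec m a1 a2 d0 X Y 0 0 = 0" using comm_sum[OF r z] by simp
  moreover have "AA 1 0 \<noteq> 0"
  proof -
    have "AA 1 0 = xa 1" by (rule fI0[OF one])
    also have "\<dots> = - Qa 1 m" using m2 by (simp add: xc_def)
    finally show ?thesis using gen[OF one] m2 by simp
  qed
  ultimately show ?thesis by simp
qed

lemma all_zero: "r < 2*m \<Longrightarrow> s < 2*m \<Longrightarrow> Ec m a1 a2 d0 X Y r s = 0"
  using nonzero_blocks blk_00 by blast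

end

lemma isCont_div_const: "isCont f a \<Longrightarrow> isCont (\<lambda>x. f x / (c::complex)) a"
  by (simp add: divide_inverse continuous_intros)

lemma isCont_if_const: "isCont f a \<Longrightarrow> isCont g a \<Longrightarrow> isCont (\<lambda>x. if P then f x else g x) a"
  by (cases P) auto

lemma entc_cont: "isCont (\<lambda>t. entc m a1 a2 (d0 - of_nat (m-1) * t) (\<lambda>i. X i + t) Y r s) 0"
  unfolding entc_def uc_def xc_def vc_def yc_def Wc_def Zc_def Qc_def
  apply (simp only: add_diff_cancel_right)
  by (intro isCont_if_const isCont_div_const continuous_intros)

lemma ev_avoid: assumes "finite B" shows "eventually (\<lambda>x. x \<notin> B) (at (0::complex))"
proof -
  have o: "open (- (B - {0}))" using assms by (intro open_Compl finite_imp_closed) auto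
  show ?thesis unfolding eventually_at_topological using o by (intro exI[of _ "- (B - {0})"]) auto
qed

lemma clean_all_zero:
  fixes m :: nat and a1 a2 d0 :: complex and X Y :: "nat \<Rightarrow> complex"
  assumes m2: "m \<ge> 2" and injX: "inj_on X {1..m-1}" and injY: "inj_on Y {1..m}"
  and trace: "d0 + (\<Sum>i\<in>{1..m-1}. X i) + (\<Sum>j\<in>{1..m}. Y j) = of_nat m * (a1+a2)"
  and r: "r < 2*m" and s: "s < 2*m"
  shows "Ec m a1 a2 d0 X Y r s = 0"
proof -
  define F where "F t = Ec m a1 a2 (d0 - of_nat (m-1) * t) (\<lambda>i. X i + t) Y r s" for t
  define B where "B = (\<lambda>(i,j). a1 + a2 - X i - Y j) ` ({1..m-1} \<times> {1..m})"
  have fB: "finite B" unfolding B_def by simp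
  have F0: "F t = 0" if t: "t \<notin> B" for t
    unfolding F_def
  proof (rule all_zero[OF m2 _ injY _ _ r s])
    show "inj_on (\<lambda>i. X i + t) {1..m-1}" using injX by (auto simp: inj_on_def)
    have "(\<Sum>i\<in>{1..m-1}. X i + t) = (\<Sum>i\<in>{1..m-1}. X i) + of_nat (m-1) * t"
      by (simp add: sum.distrib)
    thus "d0 - of_nat (m-1) * t + (\<Sum>i\<in>{1..m-1}. X i + t) + (\<Sum>j\<in>{1..m}. Y j) = of_nat m * (a1+a2)"
      using trace by simp
    fix i j assume i: "i \<in> {1..m-1}" and j: "j \<in> {1..m}"
    show "Qc a1 a2 (\<lambda>i. X i + t) Y i j \<noteq> 0"
    proof
      assume "Qc a1 a2 (\<lambda>i. X i + t) Y i j = 0"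
      hence "t = a1 + a2 - X i - Y j" by (simp add: Qc_def algebra_simps)
      hence "t \<in> B" unfolding B_def using i j by force
      with t show False by simp
    qed
  qed
  have cont: "isCont F 0" unfolding F_def Ec_def
    by (intro continuous_intros entc_cont)
  have "eventually (\<lambda>t. F t = 0) (at 0)"
    using ev_avoid[OF fB] by eventually_elim (rule F0)
  hence l1: "(F \<longlongrightarrow> 0) (at 0)" by (rule tendsto_eventually)
  have l2: "(F \<longlongrightarrow> F 0) (at 0)" using cont by (simp add: isCont_def)
  have nb: "at (0::complex) \<noteq> bot" by simp
  have "F 0 = 0" by (rule tendsto_unique[OF nb l2 l1])
  thus ?thesis unfolding F_def by simp
qed

context fixes m :: nat and a1 a2 b1 b2 b3 :: complex and c :: "nat \<Rightarrow> complex"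
  assumes m2: "m \<ge> 2"
begin

definition "XX i = b2 + c (2*m - i)"
definition "YY j = b3 + c (m + 1 - j)"
abbreviation "qq' \<equiv> qq a1 a2 b2 b3 c"
abbreviation "QQ \<equiv> Qc a1 a2 XX YY"

lemma qQ1: "qq' k l = QQ (2*m - l) (m + 1 - k)" if "k \<le> m" "l \<le> 2*m" "k \<ge> 1"
  using that by (simp add: qq_def Qc_def XX_def YY_def algebra_simps)

lemma blk0I: assumes i: "1 \<le> i" "i \<le> m - 1"
  shows "B_entry m a1 a2 b1 b2 b3 c 1 (i+1) + C_entry m a1 a2 b2 b3 c 1 (i+1) = uc m a1 a2 XX YY i"
proof -
  have B: "B_entry m a1 a2 b1 b2 b3 c 1 (i+1) = (-1)^(m+1-i) * (\<Prod>k\<in>{i+1..m}. qq' k (2*m-i)) / (\<Prod>k\<in>{m+1..2*m-1-i}. (c k - c (2*m-i)))"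
    using i m2 by (simp add: B_entry_def Let_def)
  have C: "C_entry m a1 a2 b2 b3 c 1 (i+1) = 0" using i m2 by (simp add: C_entry_def Let_def)
  have n: "(\<Prod>k\<in>{i+1..m}. qq' k (2*m-i)) = (\<Prod>l\<in>{1..m-i}. QQ i l)"
    by (rule prod.reindex_bij_witness[of _ "\<lambda>l. m+1-l" "\<lambda>k. m+1-k"]) (use i in \<open>auto simp: qq_def Qc_def XX_def YY_def algebra_simps\<close>)
  have d: "(\<Prod>k\<in>{m+1..2*m-1-i}. (c k - c (2*m-i))) = (\<Prod>k\<in>{i+1..m-1}. (XX k - XX i))"
    by (rule prod.reindex_bij_witness[of _ "\<lambda>l. 2*m-l" "\<lambda>k. 2*m-k"]) (use i in \<open>auto simp: XX_def\<close>)
  show ?thesis unfolding B C n d uc_def by simp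
qed

lemma blk00: "B_entry m a1 a2 b1 b2 b3 c 1 1 + C_entry m a1 a2 b2 b3 c 1 1 = b1 + c (2*m)"
  by (simp add: B_entry_def C_entry_def Let_def)

lemma blk0J: assumes j: "1 \<le> j" "j \<le> m"
  shows "B_entry m a1 a2 b1 b2 b3 c 1 (m+j) + C_entry m a1 a2 b2 b3 c 1 (m+j) = vc m a1 a2 XX YY j"
proof -
  have B: "B_entry m a1 a2 b1 b2 b3 c 1 (m+j) = (-1)^(m-j) * pp c b3 a1 (m+1-j) * (\<Prod>k\<in>{m+j..2*m-1}. qq' (m+1-j) k) / (\<Prod>k\<in>{1..m-j}. (c k - c (m+1-j)))"
    using j m2 by (simp add: B_entry_def Let_def)
  have C: "C_entry m a1 a2 b2 b3 c 1 (m+j) = 0" using j m2 by (simp add: C_entry_def Let_def)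
  have p: "pp c b3 a1 (m+1-j) = YY j - a1" by (simp add: pp_def YY_def algebra_simps)
  have n: "(\<Prod>k\<in>{m+j..2*m-1}. qq' (m+1-j) k) = (\<Prod>k\<in>{1..m-j}. QQ k j)"
    by (rule prod.reindex_bij_witness[of _ "\<lambda>l. 2*m-l" "\<lambda>k. 2*m-k"]) (use j in \<open>auto simp: qq_def Qc_def XX_def YY_def algebra_simps\<close>)
  have d: "(\<Prod>k\<in>{1..m-j}. (c k - c (m+1-j))) = (\<Prod>l\<in>{j+1..m}. (YY l - YY j))"
    by (rule prod.reindex_bij_witness[of _ "\<lambda>l. m+1-l" "\<lambda>k. m+1-k"]) (use j in \<open>auto simp: YY_def\<close>)
  show ?thesis unfolding B C n d p vc_def by simp
qed

lemma blkI0: assumes i: "1 \<le> i" "i \<le> m - 1"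
  shows "B_entry m a1 a2 b1 b2 b3 c (i+1) 1 + C_entry m a1 a2 b2 b3 c (i+1) 1 = xc m a1 a2 XX YY i"
proof -
  have "i < m" using i m2 by linarith
  have B: "B_entry m a1 a2 b1 b2 b3 c (i+1) 1 = 0" using i m2 by (simp add: B_entry_def Let_def)
  have C: "C_entry m a1 a2 b2 b3 c (i+1) 1 = - (\<Prod>k\<in>{1..i}. qq' k (2*m-i)) / (\<Prod>k\<in>{2*m+1-i..2*m-1}. (c (2*m-i) - c k))"
    using i m2 \<open>i < m\<close>  by (simp add: C_entry_def Let_def)
  have n: "(\<Prod>k\<in>{1..i}. qq' k (2*m-i)) = (\<Prod>l\<in>{m+1-i..m}. QQ i l)"
    by (rule prod.reindex_bij_witness[of _ "\<lambda>l. m+1-l" "\<lambda>k. m+1-k"]) (use i in \<open>auto simp: qq_def Qc_def XX_def YY_def algebra_simps\<close>)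
  have d: "(\<Prod>k\<in>{2*m+1-i..2*m-1}. (c (2*m-i) - c k)) = (\<Prod>k\<in>{1..i-1}. (XX i - XX k))"
    by (rule prod.reindex_bij_witness[of _ "\<lambda>l. 2*m-l" "\<lambda>k. 2*m-k"]) (use i in \<open>auto simp: XX_def\<close>)
  show ?thesis unfolding B C n d xc_def by simp
qed

lemma blkII: assumes i: "1 \<le> i" "i \<le> m - 1" and i': "1 \<le> i'" "i' \<le> m - 1"
  shows "B_entry m a1 a2 b1 b2 b3 c (i+1) (i'+1) + C_entry m a1 a2 b2 b3 c (i+1) (i'+1) = (if i = i' then XX i else 0)"
  using i i' by (auto simp: B_entry_def C_entry_def Let_def XX_def)

lemma blkJJ: assumes j: "1 \<le> j" "j \<le> m" and j': "1 \<le> j'" "j' \<le> m"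
  shows "B_entry m a1 a2 b1 b2 b3 c (m+j) (m+j') + C_entry m a1 a2 b2 b3 c (m+j) (m+j') = (if j = j' then YY j else 0)"
  using j j' m2 by (auto simp: B_entry_def C_entry_def Let_def YY_def)

lemma blkJ0: assumes j: "1 \<le> j" "j \<le> m"
  shows "B_entry m a1 a2 b1 b2 b3 c (m+j) 1 + C_entry m a1 a2 b2 b3 c (m+j) 1 = yc m a1 a2 XX YY j"
proof -
  have B: "B_entry m a1 a2 b1 b2 b3 c (m+j) 1 = 0" using j m2 by (simp add: B_entry_def Let_def)
  have C: "C_entry m a1 a2 b2 b3 c (m+j) 1 = - pp c b3 a2 (m+1-j) * (\<Prod>k\<in>{m+1..m-1+j}. qq' (m+1-j) k) / (\<Prod>k\<in>{m+2-j..m}. (c (m+1-j) - c k))"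
    using j m2 by (simp add: C_entry_def Let_def)
  have p: "pp c b3 a2 (m+1-j) = YY j - a2" by (simp add: pp_def YY_def algebra_simps)
  have n: "(\<Prod>k\<in>{m+1..m-1+j}. qq' (m+1-j) k) = (\<Prod>k\<in>{m+1-j..m-1}. QQ k j)"
    by (rule prod.reindex_bij_witness[of _ "\<lambda>l. 2*m-l" "\<lambda>k. 2*m-k"]) (use j in \<open>auto simp: qq_def Qc_def XX_def YY_def algebra_simps\<close>)
  have d: "(\<Prod>k\<in>{m+2-j..m}. (c (m+1-j) - c k)) = (\<Prod>l\<in>{1..j-1}. (YY j - YY l))"
    by (rule prod.reindex_bij_witness[of _ "\<lambda>l. m+1-l" "\<lambda>k. m+1-k"]) (use j in \<open>auto simp: YY_def\<close>)
  show ?thesis unfolding B C n d p yc_def by simp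
qed

lemma blkIJ: assumes i: "1 \<le> i" "i \<le> m - 1" and j: "1 \<le> j" "j \<le> m"
  shows "B_entry m a1 a2 b1 b2 b3 c (i+1) (m+j) + C_entry m a1 a2 b2 b3 c (i+1) (m+j) = Wc m a1 a2 XX YY i j"
proof -
  have "i < m" using i m2 by linarith
  have B: "B_entry m a1 a2 b1 b2 b3 c (i+1) (m+j) = (-1)^(m-j) * pp c b3 a1 (m+1-j)
          * (\<Prod>k\<in>{1..i} - {m+1-j}. qq' k (2*m-i)) * (\<Prod>k\<in>{m+j..2*m-1} - {2*m-i}. qq' (m+1-j) k)
          / ((\<Prod>k\<in>{2*m+1-i..2*m-1}. (c (2*m-i) - c k)) * (\<Prod>k\<in>{1..m-j}. (c k - c (m+1-j))))"
    using i j m2 \<open>i < m\<close>  by (simp add: B_entry_def Let_def)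
  have C: "C_entry m a1 a2 b2 b3 c (i+1) (m+j) = 0" using i j m2 \<open>i < m\<close> by (simp add: C_entry_def Let_def)
  have p: "pp c b3 a1 (m+1-j) = YY j - a1" by (simp add: pp_def YY_def algebra_simps)
  have n1: "(\<Prod>k\<in>{1..i} - {m+1-j}. qq' k (2*m-i)) = (\<Prod>l\<in>{m+1-i..m}-{j}. QQ i l)"
    by (rule prod.reindex_bij_witness[of _ "\<lambda>l. m+1-l" "\<lambda>k. m+1-k"]) (use i j in \<open>auto simp: qq_def Qc_def XX_def YY_def algebra_simps\<close>)
  have n2: "(\<Prod>k\<in>{m+j..2*m-1} - {2*m-i}. qq' (m+1-j) k) = (\<Prod>k\<in>{1..m-j}-{i}. QQ k j)"
    by (rule prod.reindex_bij_witness[of _ "\<lambda>l. 2*m-l" "\<lambda>k. 2*m-k"]) (use i j in \<open>auto simp: qq_def Qc_def XX_def YY_def algebra_simps\<close>)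
  have d1: "(\<Prod>k\<in>{2*m+1-i..2*m-1}. (c (2*m-i) - c k)) = (\<Prod>k\<in>{1..i-1}. (XX i - XX k))"
    by (rule prod.reindex_bij_witness[of _ "\<lambda>l. 2*m-l" "\<lambda>k. 2*m-k"]) (use i in \<open>auto simp: XX_def\<close>)
  have d2: "(\<Prod>k\<in>{1..m-j}. (c k - c (m+1-j))) = (\<Prod>l\<in>{j+1..m}. (YY l - YY j))"
    by (rule prod.reindex_bij_witness[of _ "\<lambda>l. m+1-l" "\<lambda>k. m+1-k"]) (use j in \<open>auto simp: YY_def\<close>)
  show ?thesis unfolding B C n1 n2 d1 d2 p Wc_def by simp
qed

lemma blkJI: assumes i: "1 \<le> i" "i \<le> m - 1" and j: "1 \<le> j" "j \<le> m"
  shows "B_entry m a1 a2 b1 b2 b3 c (m+j) (i+1) + C_entry m a1 a2 b2 b3 c (m+j) (i+1) = Zc m a1 a2 XX YY j i"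
proof -
  have "i < m" using i m2 by linarith
  have B: "B_entry m a1 a2 b1 b2 b3 c (m+j) (i+1) = 0" using i j m2 by (simp add: B_entry_def Let_def)
  have C: "C_entry m a1 a2 b2 b3 c (m+j) (i+1) = (-1)^(m+1-i) * pp c b3 a2 (m+1-j)
          * (\<Prod>k\<in>{m+1..m-1+j} - {2*m-i}. qq' (m+1-j) k) * (\<Prod>k\<in>{i+1..m} - {m+1-j}. qq' k (2*m-i))
          / ((\<Prod>k\<in>{m+2-j..m}. (c (m+1-j) - c k)) * (\<Prod>k\<in>{m+1..2*m-1-i}. (c k - c (2*m-i))))"
    using i j m2 \<open>i < m\<close>  by (simp add: C_entry_def Let_def)
  have p: "pp c b3 a2 (m+1-j) = YY j - a2" by (simp add: pp_def YY_def algebra_simps)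
  have n1: "(\<Prod>k\<in>{m+1..m-1+j} - {2*m-i}. qq' (m+1-j) k) = (\<Prod>k\<in>{m+1-j..m-1}-{i}. QQ k j)"
    by (rule prod.reindex_bij_witness[of _ "\<lambda>l. 2*m-l" "\<lambda>k. 2*m-k"]) (use i j in \<open>auto simp: qq_def Qc_def XX_def YY_def algebra_simps\<close>)
  have n2: "(\<Prod>k\<in>{i+1..m} - {m+1-j}. qq' k (2*m-i)) = (\<Prod>l\<in>{1..m-i}-{j}. QQ i l)"
    by (rule prod.reindex_bij_witness[of _ "\<lambda>l. m+1-l" "\<lambda>k. m+1-k"]) (use i j in \<open>auto simp: qq_def Qc_def XX_def YY_def algebra_simps\<close>)
  have d1: "(\<Prod>k\<in>{m+2-j..m}. (c (m+1-j) - c k)) = (\<Prod>l\<in>{1..j-1}. (YY j - YY l))"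
    by (rule prod.reindex_bij_witness[of _ "\<lambda>l. m+1-l" "\<lambda>k. m+1-k"]) (use j in \<open>auto simp: YY_def\<close>)
  have d2: "(\<Prod>k\<in>{m+1..2*m-1-i}. (c k - c (2*m-i))) = (\<Prod>k\<in>{i+1..m-1}. (XX k - XX i))"
    by (rule prod.reindex_bij_witness[of _ "\<lambda>l. 2*m-l" "\<lambda>k. 2*m-k"]) (use i in \<open>auto simp: XX_def\<close>)
  show ?thesis unfolding B C n1 n2 d1 d2 p Zc_def by simp
qed

end

lemma ent_eq:
  assumes m2: "m \<ge> 2" and r: "r < 2*m" and s: "s < 2*m"
  shows "(matB m a1 a2 b1 b2 b3 c + matC m a1 a2 b2 b3 c) $$ (r,s)
     = entc m a1 a2 (b1 + c (2*m)) (XX m b2 c) (YY m b3 c) r s"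
proof -
  have M: "(matB m a1 a2 b1 b2 b3 c + matC m a1 a2 b2 b3 c) $$ (r,s) =
     B_entry m a1 a2 b1 b2 b3 c (r+1) (s+1) + C_entry m a1 a2 b2 b3 c (r+1) (s+1)"
    using r s by (simp add: matB_def matC_def)
  consider "r = 0" | "1 \<le> r \<and> r \<le> m - 1" | "m \<le> r" by linarith
  then show ?thesis
  proof cases
    case 1
    consider "s = 0" | "1 \<le> s \<and> s \<le> m - 1" | "m \<le> s" by linarith
    then show ?thesis
    proof cases
      case 1 then show ?thesis using M \<open>r = 0\<close> blk00[OF m2] by (simp add: entc_def)
    next
      case 2
      hence "s < m" using m2 by linarith
      then show ?thesis using 2 M \<open>r = 0\<close> blk0I[OF m2, of s] m2 by (simp add: entc_def)
    next
      case 3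
      have "s + 1 = m + (s + 1 - m)" using 3 by simp
      then show ?thesis using M \<open>r = 0\<close> blk0J[OF m2, of "s+1-m"] 3 s m2 by (simp add: entc_def)
    qed
  next
    case 2
    hence rm: "r < m" using m2 by linarith
    consider "s = 0" | "1 \<le> s \<and> s \<le> m - 1" | "m \<le> s" by linarith
    then show ?thesis
    proof cases
      case 1 then show ?thesis using M 2 blkI0[OF m2, of r] m2 rm by (simp add: entc_def)
    next
      case 3: 2 then show ?thesis using M 2 blkII[OF m2, of r s] m2 rm by (auto simp: entc_def XX_def[OF m2])
    next
      case 3
      have "s + 1 = m + (s + 1 - m)" using 3 by simp
      then show ?thesis using M 2 blkIJ[OF m2, of r "s+1-m"] 3 s m2 rm by (simp add: entc_def)
    qed
  next
    case 3
    have rr: "r + 1 = m + (r + 1 - m)" using 3 by simp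
    consider "s = 0" | "1 \<le> s \<and> s \<le> m - 1" | "m \<le> s" by linarith
    then show ?thesis
    proof cases
      case 1 then show ?thesis using M 3 rr blkJ0[OF m2, of "r+1-m"] r m2 by (simp add: entc_def)
    next
      case 2
      hence "s < m" using m2 by linarith
      then show ?thesis using 2 M 3 rr blkJI[OF m2, of s "r+1-m"] r m2 by (simp add: entc_def)
    next
      case 4: 3
      have "s + 1 = m + (s + 1 - m)" using 4 by simp
      then show ?thesis using M 3 4 rr blkJJ[OF m2, of "r+1-m" "s+1-m"] r s m2
        by (auto simp: entc_def YY_def[OF m2])
    qed
  qed
qed

theorem theorem2p9:
  fixes m :: nat and a1 a2 b1 b2 b3 :: complex and c :: "nat \<Rightarrow> complex"
  assumes "m \<ge> 2"
    and "a1 \<noteq> a2"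
    and "b1 \<noteq> b2" and "b1 \<noteq> b3" and "b2 \<noteq> b3"
    and "inj_on c {1..2*m}"
    and "of_nat m * a1 + of_nat m * a2 = b1 + of_nat (m - 1) * b2 + of_nat m * b3 + (\<Sum>i=1..2*m. c i)"
  shows "diagonalizable (matB m a1 a2 b1 b2 b3 c + matC m a1 a2 b2 b3 c)
    \<and> (\<forall>x. eigenvalue (matB m a1 a2 b1 b2 b3 c + matC m a1 a2 b2 b3 c) x \<longleftrightarrow> x = a1 \<or> x = a2)
    \<and> order a1 (char_poly (matB m a1 a2 b1 b2 b3 c + matC m a1 a2 b2 b3 c)) = m
    \<and> order a2 (char_poly (matB m a1 a2 b1 b2 b3 c + matC m a1 a2 b2 b3 c)) = m"
proof -
  have m2: "m \<ge> 2" using assms(1) .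
  have m1: "m \<ge> 1" using m2 by simp
  have injc: "inj_on c {1..2*m}" using assms(6) .
  define AM where "AM = matB m a1 a2 b1 b2 b3 c + matC m a1 a2 b2 b3 c"
  define d0 where "d0 = b1 + c (2*m)"
  define X where "X = XX m b2 c"
  define Y where "Y = YY m b3 c"
  have Xe: "X i = b2 + c (2*m - i)" for i unfolding X_def by (rule XX_def[OF m2])
  have Ye: "Y j = b3 + c (m + 1 - j)" for j unfolding Y_def by (rule YY_def[OF m2])
  have carr: "AM \<in> carrier_mat (2*m) (2*m)" by (simp add: AM_def matB_def matC_def)
  have ent: "AM $$ (r,s) = entc m a1 a2 d0 X Y r s" if "r < 2*m" "s < 2*m" for r s
    unfolding AM_def d0_def X_def Y_def by (rule ent_eq[OF m2 that])
  have injX: "inj_on X {1..m-1}"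
  proof (rule inj_onI)
    fix i i' assume i: "i \<in> {1..m-1}" and i': "i' \<in> {1..m-1}" and eq: "X i = X i'"
    hence "c (2*m - i) = c (2*m - i')" by (simp add: Xe)
    moreover have "2*m - i \<in> {1..2*m}" "2*m - i' \<in> {1..2*m}" using i i' by auto
    ultimately have "2*m - i = 2*m - i'" by (intro inj_onD[OF injc])
    thus "i = i'" using i i' by auto
  qed
  have injY: "inj_on Y {1..m}"
  proof (rule inj_onI)
    fix j j' assume j: "j \<in> {1..m}" and j': "j' \<in> {1..m}" and eq: "Y j = Y j'"
    hence "c (m + 1 - j) = c (m + 1 - j')" by (simp add: Ye)
    moreover have "m + 1 - j \<in> {1..2*m}" "m + 1 - j' \<in> {1..2*m}" using j j' by auto
    ultimately have "m + 1 - j = m + 1 - j'" by (intro inj_onD[OF injc])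
    thus "j = j'" using j j' by auto
  qed
  have sumX: "(\<Sum>i\<in>{1..m-1}. X i) = of_nat (m-1) * b2 + (\<Sum>k\<in>{m+1..2*m-1}. c k)"
  proof -
    have "(\<Sum>i\<in>{1..m-1}. X i) = (\<Sum>i\<in>{1..m-1}. b2) + (\<Sum>i\<in>{1..m-1}. c (2*m - i))"
      by (simp add: Xe sum.distrib)
    also have "(\<Sum>i\<in>{1..m-1}. c (2*m - i)) = (\<Sum>k\<in>{m+1..2*m-1}. c k)"
      by (rule sum.reindex_bij_witness[of _ "\<lambda>k. 2*m-k" "\<lambda>i. 2*m-i"]) auto
    finally show ?thesis by simp
  qed
  have sumY: "(\<Sum>j\<in>{1..m}. Y j) = of_nat m * b3 + (\<Sum>k\<in>{1..m}. c k)"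
  proof -
    have "(\<Sum>j\<in>{1..m}. Y j) = (\<Sum>j\<in>{1..m}. b3) + (\<Sum>j\<in>{1..m}. c (m + 1 - j))"
      by (simp add: Ye sum.distrib)
    also have "(\<Sum>j\<in>{1..m}. c (m + 1 - j)) = (\<Sum>k\<in>{1..m}. c k)"
      by (rule sum.reindex_bij_witness[of _ "\<lambda>k. m+1-k" "\<lambda>j. m+1-j"]) auto
    finally show ?thesis by simp
  qed
  have sumc: "(\<Sum>i=1..2*m. c i) = (\<Sum>k\<in>{1..m}. c k) + (\<Sum>k\<in>{m+1..2*m-1}. c k) + c (2*m)"
  proof -
    have eq: "{1..2*m} = insert (2*m) ({1..m} \<union> {m+1..2*m-1})" using m2 by auto
    have "(\<Sum>i\<in>insert (2*m) ({1..m} \<union> {m+1..2*m-1}). c i) = c (2*m) + (\<Sum>i\<in>{1..m} \<union> {m+1..2*m-1}. c i)"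
      by (rule sum.insert) auto
    also have "(\<Sum>i\<in>{1..m} \<union> {m+1..2*m-1}. c i) = (\<Sum>k\<in>{1..m}. c k) + (\<Sum>k\<in>{m+1..2*m-1}. c k)"
      by (rule sum.union_disjoint) auto
    finally show ?thesis unfolding eq by (simp add: algebra_simps)
  qed
  have trc: "d0 + (\<Sum>i\<in>{1..m-1}. X i) + (\<Sum>j\<in>{1..m}. Y j) = of_nat m * (a1+a2)"
    unfolding sumX sumY d0_def using assms(7) sumc by (simp add: algebra_simps)
  have Qz: "(AM*AM)$$(r,s) - (a1+a2)*AM$$(r,s) + (if r = s then a1*a2 else 0) = 0"
    if r: "r < 2*m" and s: "s < 2*m" for r s
  proof -
    have "(AM*AM)$$(r,s) = (\<Sum>k<2*m. entc m a1 a2 d0 X Y r k * entc m a1 a2 d0 X Y k s)"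
      using carr r s by (auto simp: scalar_prod_def atLeast0LessThan ent intro!: sum.cong)
    hence "(AM*AM)$$(r,s) - (a1+a2)*AM$$(r,s) + (if r = s then a1*a2 else 0) = Ec m a1 a2 d0 X Y r s"
      unfolding Ec_def using ent[OF r s] by simp
    also have "\<dots> = 0" by (rule clean_all_zero[OF m2 injX injY trc r s])
    finally show ?thesis .
  qed
  have tr: "mtr AM = of_nat m * (a1 + a2)"
  proof -
    have "mtr AM = (\<Sum>i<2*m. entc m a1 a2 d0 X Y i i)"
      using carr by (auto simp: mtr_def ent intro!: sum.cong)
    also have "\<dots> = entc m a1 a2 d0 X Y 0 0 + (\<Sum>i\<in>{1..m-1}. entc m a1 a2 d0 X Y i i)
        + (\<Sum>j\<in>{1..m}. entc m a1 a2 d0 X Y (j+m-1) (j+m-1))" by (rule sum_split3[OF m1])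
    also have "entc m a1 a2 d0 X Y 0 0 = d0" by (rule e00[OF m1])
    also have "(\<Sum>i\<in>{1..m-1}. entc m a1 a2 d0 X Y i i) = (\<Sum>i\<in>{1..m-1}. X i)"
    proof (rule sum.cong[OF refl])
      fix i assume i: "i \<in> {1..m-1}"
      show "entc m a1 a2 d0 X Y i i = X i" using eII[OF m1 i i] by simp
    qed
    also have "(\<Sum>j\<in>{1..m}. entc m a1 a2 d0 X Y (j+m-1) (j+m-1)) = (\<Sum>j\<in>{1..m}. Y j)"
    proof (rule sum.cong[OF refl])
      fix j assume j: "j \<in> {1..m}"
      show "entc m a1 a2 d0 X Y (j+m-1) (j+m-1) = Y j" using eJJ[OF m1 j j] by simp
    qed
    finally show ?thesis using trc by simp
  qed
  have "diagonalizable AM \<and> (\<forall>x. eigenvalue AM x \<longleftrightarrow> x=a1 \<or> x=a2) \<and> order a1 (char_poly AM) = m \<and> order a2 (char_poly AM) = m"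
    by (rule abstract_diag[OF carr assms(2) Qz tr refl m1])
  thus ?thesis unfolding AM_def .
qed

end
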